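(* Let $\alpha>0$ and let $a_1,\dots,a_N,b_1,\dots,b_{N-1}$ be independent with $a_i\sim\mathcal N(0,\alpha)$, $b_i\ge0$, $b_i^2\sim\frac\alpha2\chi^2(2i/\alpha)$; set $c_i=(b_i^2-i)/\sqrt i$. Let $\theta_N=1+N^{-2/3}w_N$ where $w_N>0$, $(\log\log N)^2/w_N\to0$ and $w_N/(\log N)^2\to0$. For $1\le i\le N$ let $r_i=1+\sqrt{1-\frac{i-1}{N\theta_N^2}}$, $m_i=1-\sqrt{1-\frac{i-1}{N\theta_N^2}}$, $\gamma_i=m_i/r_i$, and for $3\le i\le N$ let \[ \xi_i=\frac{a_i}{\sqrt N\theta_N r_i}+\sqrt{\frac{m_i}{r_i}}\,\frac{c_{i-1}}{\sqrt N\theta_N r_{i-1}}. \] Define $L_2=0$ and $L_i=\xi_i+\gamma_iL_{i-1}$ for $3\le i\le N$. Then \[ \frac{\sum_{i=3}^NL_i}{\sqrt{\alpha\log\frac{\theta_N+\sqrt{\theta_N^2-1}}{2\sqrt{\theta_N^2-1}}}}\xrightarrow{d}\mathcal N(0,1). \]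
   Context: For $d>0$, $\chi^2(d)$ denotes the distribution with density $\frac{1}{2^{d/2}\Gamma(d/2)}x^{d/2-1}e^{-x/2}\mathbf 1_{x>0}$. *)

theory Defs
  imports "HOL-Probability.Probability"
begin

definition chi2_density :: "real \<Rightarrow> real \<Rightarrow> real" where
  "chi2_density d x = (if x > 0 then
     1 / (2 powr (d/2) * Gamma (d/2)) * x powr (d/2 - 1) * exp (-x/2) else 0)"

definition chi2_distribution :: "real \<Rightarrow> real measure" where
  "chi2_distribution d = density lborel (\<lambda>x. ennreal (chi2_density d x))"

definition thetaN :: "(nat \<Rightarrow> real) \<Rightarrow> nat \<Rightarrow> real" where
  "thetaN w N = 1 + real N powr (-2/3) * w N"

definition rr :: "real \<Rightarrow> nat \<Rightarrow> nat \<Rightarrow> real" where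
  "rr \<theta> N i = 1 + sqrt (1 - (real i - 1) / (real N * \<theta>\<^sup>2))"

definition mm :: "real \<Rightarrow> nat \<Rightarrow> nat \<Rightarrow> real" where
  "mm \<theta> N i = 1 - sqrt (1 - (real i - 1) / (real N * \<theta>\<^sup>2))"

definition gam :: "real \<Rightarrow> nat \<Rightarrow> nat \<Rightarrow> real" where
  "gam \<theta> N i = mm \<theta> N i / rr \<theta> N i"

definition cc :: "(nat \<Rightarrow> 'a \<Rightarrow> real) \<Rightarrow> nat \<Rightarrow> 'a \<Rightarrow> real" where
  "cc b j \<omega> = ((b j \<omega>)\<^sup>2 - real j) / sqrt (real j)"

definition xi :: "real \<Rightarrow> nat \<Rightarrow> (nat \<Rightarrow> 'a \<Rightarrow> real) \<Rightarrow> (nat \<Rightarrow> 'a \<Rightarrow> real)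
    \<Rightarrow> nat \<Rightarrow> 'a \<Rightarrow> real" where
  "xi \<theta> N a b i \<omega> =
     a i \<omega> / (sqrt (real N) * \<theta> * rr \<theta> N i)
     + sqrt (mm \<theta> N i / rr \<theta> N i) * cc b (i - 1) \<omega> / (sqrt (real N) * \<theta> * rr \<theta> N (i - 1))"

text \<open>L_i for i \<le> 2 is 0 (only L_2 = 0 is used); L_i = xi_i + gamma_i L_(i-1) for i \<ge> 3.\<close>
primrec LL :: "real \<Rightarrow> nat \<Rightarrow> (nat \<Rightarrow> 'a \<Rightarrow> real) \<Rightarrow> (nat \<Rightarrow> 'a \<Rightarrow> real)
    \<Rightarrow> nat \<Rightarrow> 'a \<Rightarrow> real" where
  "LL \<theta> N a b 0 = (\<lambda>\<omega>. 0)"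
| "LL \<theta> N a b (Suc i) = (if Suc i \<le> 2 then (\<lambda>\<omega>. 0)
     else (\<lambda>\<omega>. xi \<theta> N a b (Suc i) \<omega> + gam \<theta> N (Suc i) * LL \<theta> N a b i \<omega>))"

end

theory Submission
  imports Defs "HOL-Real_Asymp.Real_Asymp"
begin

lemma gamma_bochner:
  fixes z :: real assumes z: "z > 0"
  shows "has_bochner_integral lborel (\<lambda>t. indicator {0..} t * (t powr (z - 1) / exp t)) (Gamma z)"
proof -
  have "((\<lambda>t. t powr (z - 1) / exp t) has_integral Gamma z) {0..}"
    using Gamma_integral_real[OF z] .
  then have "((\<lambda>t. indicator {0..} t * (t powr (z - 1) / exp t)) has_integral Gamma z) UNIV"
  proof -
    have e: "(\<lambda>t. indicator {0..} t * (t powr (z - 1) / exp t)) = (\<lambda>t. if t \<in> {0..} then t powr (z - 1) / exp t else 0)"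
      by (auto simp: indicator_def)
    show ?thesis unfolding e has_integral_restrict_UNIV by fact
  qed
  then have "integral\<^sup>N lborel (\<lambda>t. indicator {0..} t * (t powr (z - 1) / exp t)) = Gamma z"
    by (intro nn_integral_has_integral_lborel) (auto simp: indicator_def)
  then show ?thesis
    by (intro has_bochner_integral_nn_integral) (auto simp: indicator_def less_imp_le[OF Gamma_real_pos[OF z]])
qed

lemma Gamma_ratio_prod:
  fixes x :: real assumes "x > 0"
  shows "Gamma (x + real n) = Gamma x * (\<Prod>k<n. (x + real k))"
proof (induction n)
  case 0 then show ?case by simp
next
  case (Suc n)
  have "Gamma (x + real (Suc n)) = Gamma ((x + real n) + 1)" by (rule arg_cong[where f=Gamma]) simp
  also have "\<dots> = (x + real n) * Gamma (x + real n)"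
    using assms by (subst Gamma_plus1) auto
  finally show ?case using Suc by (simp add: mult_ac)
qed

lemma chi2_moment:
  fixes d :: real assumes d: "d > 0"
  shows "has_bochner_integral lborel (\<lambda>x. chi2_density d x * x ^ n) (\<Prod>k<n. (d + 2 * real k))"
proof -
  define z where "z = d/2 + real n"
  have z: "z > 0" using d by (simp add: z_def add_pos_nonneg)
  define K where "K = 2 powr (real n - 1) / Gamma (d/2)"
  have G: "Gamma (d/2) > 0" using d by simp
  have eq: "chi2_density d (0 + 2 * y) * (0 + 2 * y) ^ n = K * (indicator {0..} y * (y powr (z - 1) / exp y))" for y
  proof (cases "y > 0")
    case True
    have "(2*y) powr (d/2 - 1) * (2*y)^n = (2*y) powr (z - 1)"
    proof -
      have "(2*y)^n = (2*y) powr (real n)" using True by (simp add: powr_realpow)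
      then show ?thesis using True by (simp add: z_def powr_add[symmetric] algebra_simps)
    qed
    also have "\<dots> = 2 powr (z - 1) * y powr (z - 1)" using True by (simp add: powr_mult)
    finally have A: "(2*y) powr (d/2 - 1) * (2*y)^n = 2 powr (z - 1) * y powr (z - 1)" .
    have B: "2 powr (z - 1) = 2 powr (d/2) * 2 powr (real n - 1)"
      by (simp add: z_def powr_add[symmetric] algebra_simps)
    have "chi2_density d (0 + 2 * y) * (0 + 2 * y) ^ n
        = 1 / (2 powr (d/2) * Gamma (d/2)) * ((2*y) powr (d/2 - 1) * (2*y)^n) * exp (-y)"
      using True unfolding chi2_density_def by (simp add: mult_ac)
    also have "\<dots> = 1 / (2 powr (d/2) * Gamma (d/2)) * (2 powr (d/2) * 2 powr (real n - 1) * y powr (z - 1)) * exp (-y)"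
      unfolding A B ..
    also have "\<dots> = K * (indicator {0..} y * (y powr (z - 1) / exp y))"
      using True G unfolding K_def by (simp add: field_simps exp_minus)
    finally show ?thesis .
  next
    case False
    then show ?thesis by (auto simp: chi2_density_def indicator_def)
  qed
  have "has_bochner_integral lborel (\<lambda>y. K * (indicator {0..} y * (y powr (z - 1) / exp y))) (K * Gamma z)"
    by (intro has_bochner_integral_mult_right gamma_bochner z)
  moreover have feq: "(\<lambda>y. chi2_density d (0 + 2 * y) * (0 + 2 * y) ^ n) = (\<lambda>y. K * (indicator {0..} y * (y powr (z - 1) / exp y)))"
    by (intro ext eq)
  moreover have "(2 * K * Gamma z) /\<^sub>R \<bar>2\<bar> = K * Gamma z" by simp
  ultimately have "has_bochner_integral lborel (\<lambda>y. chi2_density d (0 + 2 * y) * (0 + 2 * y) ^ n) ((2 * K * Gamma z) /\<^sub>R \<bar>2\<bar>)"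
    by simp
  then have "has_bochner_integral lborel (\<lambda>x. chi2_density d x * x ^ n) (2 * K * Gamma z)"
    by (subst lborel_has_bochner_integral_real_affine_iff[where c=2 and t=0]) auto
  moreover have "2 * K * Gamma z = (\<Prod>k<n. (d + 2 * real k))"
  proof -
    have "Gamma z = Gamma (d/2) * (\<Prod>k<n. (d/2 + real k))"
      unfolding z_def using d by (intro Gamma_ratio_prod) auto
    moreover have "(\<Prod>k<n. (d + 2 * real k)) = 2 ^ n * (\<Prod>k<n. (d/2 + real k))"
      by (induction n) (auto simp: algebra_simps)
    moreover have "2 * 2 powr (real n - 1) = (2::real) ^ n"
      by (simp add: powr_diff powr_realpow)
    ultimately show ?thesis using G unfolding K_def by (simp add: field_simps)
  qed
  ultimately show ?thesis by simp
qed


lemma exp_neg_quad_bound: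
  fixes x :: real assumes "x \<ge> 0"
  shows "\<bar>exp (-x) - (1 - x)\<bar> \<le> x^2 / 2"
proof -
  have lo: "1 - x \<le> exp (-x)" using exp_ge_add_one_self[of "-x"] by simp
  define f where "f y = 1 - y + y^2/2 - exp (-y)" for y :: real
  have d: "(f has_real_derivative (-1 + y + exp (-y))) (at y)" for y
    unfolding f_def by (auto intro!: derivative_eq_intros simp: power2_eq_square)
  have "f 0 \<le> f x"
  proof (rule DERIV_nonneg_imp_nondecreasing[OF assms])
    fix y assume "0 \<le> y" "y \<le> x"
    show "\<exists>y'. (f has_real_derivative y') (at y) \<and> 0 \<le> y'"
      using d[of y] exp_ge_add_one_self[of "-y"] by (intro exI[of _ "-1 + y + exp (-y)"]) auto
  qed
  then have "exp (-x) \<le> 1 - x + x^2/2" by (simp add: f_def)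
  with lo show ?thesis by (simp add: abs_if)
qed

lemma prod_diff_bound:
  fixes a b :: "'i \<Rightarrow> complex"
  assumes "finite J" "\<And>k. k \<in> J \<Longrightarrow> norm (a k) \<le> 1" "\<And>k. k \<in> J \<Longrightarrow> norm (b k) \<le> 1"
  shows "norm ((\<Prod>k\<in>J. a k) - (\<Prod>k\<in>J. b k)) \<le> (\<Sum>k\<in>J. norm (a k - b k))"
  using assms
proof (induction J rule: finite_induct)
  case empty then show ?case by simp
next
  case (insert x F)
  have pb: "norm (\<Prod>k\<in>F. b k) \<le> 1"
    using insert.prems by (auto simp: prod_norm[symmetric] intro!: prod_le_1)
  have "(\<Prod>k\<in>insert x F. a k) - (\<Prod>k\<in>insert x F. b k)
      = a x * ((\<Prod>k\<in>F. a k) - (\<Prod>k\<in>F. b k)) + (a x - b x) * (\<Prod>k\<in>F. b k)"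
    using insert.hyps by (simp add: algebra_simps)
  then have "norm ((\<Prod>k\<in>insert x F. a k) - (\<Prod>k\<in>insert x F. b k))
      \<le> norm (a x) * norm ((\<Prod>k\<in>F. a k) - (\<Prod>k\<in>F. b k)) + norm (a x - b x) * norm (\<Prod>k\<in>F. b k)"
    by (metis norm_mult norm_triangle_ineq)
  also have "\<dots> \<le> 1 * norm ((\<Prod>k\<in>F. a k) - (\<Prod>k\<in>F. b k)) + norm (a x - b x) * 1"
    using insert.prems pb by (intro add_mono mult_mono) auto
  also have "\<dots> \<le> (\<Sum>k\<in>F. norm (a k - b k)) + norm (a x - b x)"
    using insert by auto
  finally show ?case using insert.hyps by (simp add: add.commute)
qed

lemma (in prob_space) char_sum_bound:
  fixes Z :: "'i \<Rightarrow> 'a \<Rightarrow> real" and \<sigma> \<rho> :: "'i \<Rightarrow> real"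
  assumes J: "finite J" and ind: "indep_vars (\<lambda>_. borel) Z J"
    and rv: "\<And>k. k \<in> J \<Longrightarrow> Z k \<in> borel_measurable M"
    and i1: "\<And>k. k \<in> J \<Longrightarrow> integrable M (Z k)"
    and i2: "\<And>k. k \<in> J \<Longrightarrow> integrable M (\<lambda>\<omega>. (Z k \<omega>)^2)"
    and i3: "\<And>k. k \<in> J \<Longrightarrow> integrable M (\<lambda>\<omega>. \<bar>Z k \<omega>\<bar>^3)"
    and e1: "\<And>k. k \<in> J \<Longrightarrow> expectation (Z k) = 0"
    and e2: "\<And>k. k \<in> J \<Longrightarrow> expectation (\<lambda>\<omega>. (Z k \<omega>)^2) = \<sigma> k"
    and e3: "\<And>k. k \<in> J \<Longrightarrow> expectation (\<lambda>\<omega>. \<bar>Z k \<omega>\<bar>^3) \<le> \<rho> k"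
  shows "cmod (char (distr M borel (\<lambda>\<omega>. \<Sum>k\<in>J. Z k \<omega>)) t - exp (- (t^2) * (\<Sum>k\<in>J. \<sigma> k) / 2))
     \<le> (\<Sum>k\<in>J. \<bar>t\<bar>^3 * \<rho> k / 6 + t^4 * (\<sigma> k)^2 / 8)"
proof -
  have sig0: "\<sigma> k \<ge> 0" if "k \<in> J" for k
    using e2[OF that, symmetric] by simp
  have char_eq: "char (distr M borel (\<lambda>\<omega>. \<Sum>k\<in>J. Z k \<omega>)) t = (\<Prod>k\<in>J. char (distr M borel (Z k)) t)"
    by (rule char_distr_sum[OF ind])
  have exp_eq: "complex_of_real (exp (- (t^2) * (\<Sum>k\<in>J. \<sigma> k) / 2)) = (\<Prod>k\<in>J. complex_of_real (exp (- (t^2) * \<sigma> k / 2)))"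
  proof -
    have "exp (- (t^2) * (\<Sum>k\<in>J. \<sigma> k) / 2) = (\<Prod>k\<in>J. exp (- (t^2) * \<sigma> k / 2))"
      using J by (simp add: exp_sum[symmetric] sum_distrib_left sum_divide_distrib)
    then show ?thesis by simp
  qed
  have termb: "cmod (char (distr M borel (Z k)) t - exp (- (t^2) * \<sigma> k / 2)) \<le> \<bar>t\<bar>^3 * \<rho> k / 6 + t^4 * (\<sigma> k)^2 / 8"
    if k: "k \<in> J" for k
  proof -
    have "variance (Z k) = \<sigma> k" using e1[OF k] e2[OF k] by simp
    then have A: "cmod (char (distr M borel (Z k)) t - (1 - t^2 * \<sigma> k / 2)) \<le>
      (t^2 / 6) * expectation (\<lambda>x. min (6 * (Z k x)^2) (\<bar>t\<bar> * \<bar>Z k x\<bar>^3))"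
      using rv[OF k] i1[OF k] i2[OF k] e1[OF k] by (intro char_approx3') auto
    have "expectation (\<lambda>x. min (6 * (Z k x)^2) (\<bar>t\<bar> * \<bar>Z k x\<bar>^3)) \<le> expectation (\<lambda>x. \<bar>t\<bar> * \<bar>Z k x\<bar>^3)"
    proof (rule integral_mono)
      show "integrable M (\<lambda>x. min (6 * (Z k x)^2) (\<bar>t\<bar> * \<bar>Z k x\<bar>^3))"
        by (rule Bochner_Integration.integrable_bound[where f="\<lambda>x. 6 * (Z k x)^2"])
           (use i2[OF k] rv[OF k] in auto)
      show "integrable M (\<lambda>x. \<bar>t\<bar> * \<bar>Z k x\<bar>^3)" using i3[OF k] by auto
    qed auto
    also have "\<dots> \<le> \<bar>t\<bar> * \<rho> k" using e3[OF k] by (simp add: mult_left_mono)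
    finally have B: "(t^2 / 6) * expectation (\<lambda>x. min (6 * (Z k x)^2) (\<bar>t\<bar> * \<bar>Z k x\<bar>^3)) \<le> \<bar>t\<bar>^3 * \<rho> k / 6"
      by (auto intro: mult_left_mono[THEN order.trans] simp: power2_eq_square power3_eq_cube abs_mult[symmetric] abs_mult_self_eq)
    have C: "cmod (complex_of_real (1 - t^2 * \<sigma> k / 2) - complex_of_real (exp (- (t^2) * \<sigma> k / 2))) \<le> t^4 * (\<sigma> k)^2 / 8"
    proof -
      have "\<bar>exp (-(t^2 * \<sigma> k / 2)) - (1 - t^2 * \<sigma> k / 2)\<bar> \<le> (t^2 * \<sigma> k / 2)^2 / 2"
        using sig0[OF k] by (intro exp_neg_quad_bound) auto
      moreover have "(t^2 * \<sigma> k / 2)^2 / 2 = t^4 * (\<sigma> k)^2 / 8"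
        by (simp add: power_mult_distrib power2_eq_square power4_eq_xxxx)
      ultimately have "\<bar>(1 - t^2 * \<sigma> k / 2) - exp (- (t^2) * \<sigma> k / 2)\<bar> \<le> t^4 * (\<sigma> k)^2 / 8"
        by (simp add: abs_minus_commute)
      then show ?thesis by (simp only: of_real_diff[symmetric] norm_of_real)
    qed
    have "cmod (char (distr M borel (Z k)) t - exp (- (t^2) * \<sigma> k / 2)) \<le>
       cmod (char (distr M borel (Z k)) t - (1 - t^2 * \<sigma> k / 2)) + cmod (complex_of_real (1 - t^2 * \<sigma> k / 2) - complex_of_real (exp (- (t^2) * \<sigma> k / 2)))"
      by (rule order.trans[OF _ norm_triangle_ineq]) (simp add: of_real_diff)
    then show ?thesis using A B C by linarith
  qed
  have "cmod ((\<Prod>k\<in>J. char (distr M borel (Z k)) t) - (\<Prod>k\<in>J. complex_of_real (exp (- (t^2) * \<sigma> k / 2))))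
     \<le> (\<Sum>k\<in>J. cmod (char (distr M borel (Z k)) t - exp (- (t^2) * \<sigma> k / 2)))"
  proof (rule prod_diff_bound[OF J])
    fix k assume k: "k \<in> J"
    interpret R: real_distribution "distr M borel (Z k)"
      using rv[OF k] by (rule real_distribution_distr)
    show "cmod (char (distr M borel (Z k)) t) \<le> 1" by (rule R.cmod_char_le_1)
    show "cmod (complex_of_real (exp (- (t^2) * \<sigma> k / 2))) \<le> 1"
      using sig0[OF k] by (simp add: norm_of_real)
  qed
  also have "\<dots> \<le> (\<Sum>k\<in>J. \<bar>t\<bar>^3 * \<rho> k / 6 + t^4 * (\<sigma> k)^2 / 8)"
    by (intro sum_mono termb)
  finally show ?thesis by (simp only: char_eq exp_eq)
qed


lemma (in prob_space) hbi_normal: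
  assumes X: "distributed M lborel X (\<lambda>x. ennreal (normal_density 0 \<sigma> x))"
    and g: "g \<in> borel_measurable borel"
    and I: "has_bochner_integral lborel (\<lambda>x. normal_density 0 \<sigma> x * g x) r"
  shows "has_bochner_integral M (\<lambda>\<omega>. g (X \<omega>)) r"
proof -
  have nn: "\<And>x. 0 \<le> normal_density 0 \<sigma> x" by (rule normal_density_nonneg)
  have "integrable M (\<lambda>\<omega>. g (X \<omega>))"
    using distributed_integrable[OF X, of g] g nn I by (auto simp: has_bochner_integral_iff)
  moreover have "integral\<^sup>L M (\<lambda>\<omega>. g (X \<omega>)) = r"
    using distributed_integral[OF X, of g] g nn I by (auto simp: has_bochner_integral_iff)
  ultimately show ?thesis by (simp add: has_bochner_integral_iff)
qed

lemma (in prob_space) normal_moments: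
  assumes X: "distributed M lborel X (\<lambda>x. ennreal (normal_density 0 (sqrt \<alpha>) x))" and a: "\<alpha> > 0"
  shows "has_bochner_integral M X 0"
    and "has_bochner_integral M (\<lambda>\<omega>. (X \<omega>)^2) \<alpha>"
    and "has_bochner_integral M (\<lambda>\<omega>. (X \<omega>)^4) (3 * \<alpha>^2)"
proof -
  have s: "sqrt \<alpha> > 0" using a by simp
  have "has_bochner_integral lborel (\<lambda>x. normal_density 0 (sqrt \<alpha>) x * (x - 0)^(2*0+1)) 0"
    by (rule normal_moment_odd[OF s])
  then show "has_bochner_integral M X 0"
    using hbi_normal[OF X, of "\<lambda>x. x"] by simp
  have "has_bochner_integral lborel (\<lambda>x. normal_density 0 (sqrt \<alpha>) x * (x - 0)^(2*1))
      (fact (2 * 1) / ((2 / (sqrt \<alpha>)\<^sup>2)^1 * fact 1))"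
    by (rule normal_moment_even[OF s])
  moreover have "(fact (2 * 1) / ((2 / (sqrt \<alpha>)\<^sup>2)^1 * fact 1)) = \<alpha>"
    using a by (simp add: fact_numeral)
  ultimately show "has_bochner_integral M (\<lambda>\<omega>. (X \<omega>)^2) \<alpha>"
    using hbi_normal[OF X, of "\<lambda>x. x^2"] by simp
  have "has_bochner_integral lborel (\<lambda>x. normal_density 0 (sqrt \<alpha>) x * (x - 0)^(2*2))
      (fact (2 * 2) / ((2 / (sqrt \<alpha>)\<^sup>2)^2 * fact 2))"
    by (rule normal_moment_even[OF s])
  moreover have "(fact (2 * 2) / ((2 / (sqrt \<alpha>)\<^sup>2)^2 * fact 2)) = 3 * \<alpha>^2"
    using a by (simp add: fact_numeral power2_eq_square field_simps)
  ultimately show "has_bochner_integral M (\<lambda>\<omega>. (X \<omega>)^4) (3 * \<alpha>^2)"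
    using hbi_normal[OF X, of "\<lambda>x. x^4"] by simp
qed

lemma chi2_density_nonneg: "d > 0 \<Longrightarrow> chi2_density d x \<ge> 0"
  unfolding chi2_density_def by (auto intro!: mult_nonneg_nonneg divide_nonneg_nonneg less_imp_le[OF Gamma_real_pos])

lemma (in prob_space) hbi_chi:
  assumes d: "d > 0" and Y: "Y \<in> borel_measurable M"
    and D: "distr M borel Y = distr (chi2_distribution d) borel (\<lambda>x. \<alpha> / 2 * x)"
    and g: "g \<in> borel_measurable borel"
    and I: "has_bochner_integral lborel (\<lambda>x. chi2_density d x * g (\<alpha> / 2 * x)) r"
  shows "has_bochner_integral M (\<lambda>\<omega>. g (Y \<omega>)) r"
proof -
  have cm: "chi2_density d \<in> borel_measurable borel"
    unfolding chi2_density_def[abs_def] by measurable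
  have "has_bochner_integral (chi2_distribution d) (\<lambda>x. g (\<alpha> / 2 * x)) r"
    unfolding chi2_distribution_def
    by (rule has_bochner_integral_density) (use I cm g chi2_density_nonneg[OF d] in auto)
  then have "has_bochner_integral (distr (chi2_distribution d) borel (\<lambda>x. \<alpha> / 2 * x)) g r"
    by (intro has_bochner_integral_distr g) (auto simp: chi2_distribution_def)
  then have "has_bochner_integral (distr M borel Y) g r" using D by simp
  then show ?thesis
    using Y g by (simp add: has_bochner_integral_iff integrable_distr_eq integral_distr)
qed


lemma chi_affine_power:
  fixes d u v :: real assumes d: "d > 0"
  shows "has_bochner_integral lborel (\<lambda>x. chi2_density d x * (u * x + v)^n)
     (\<Sum>k\<le>n. of_nat (n choose k) * u^k * v^(n-k) * (\<Prod>i<k. (d + 2 * real i)))"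
proof -
  have eq: "chi2_density d x * (u * x + v)^n = (\<Sum>k\<le>n. of_nat (n choose k) * u^k * v^(n-k) * (chi2_density d x * x^k))" for x
    by (simp add: binomial_ring sum_distrib_left power_mult_distrib mult_ac)
  show ?thesis unfolding eq
    by (intro has_bochner_integral_sum has_bochner_integral_mult_right chi2_moment d)
qed

lemma (in prob_space) cc_moments:
  fixes b :: "nat \<Rightarrow> 'a \<Rightarrow> real"
  assumes a: "\<alpha> > 0" and j: "j \<ge> 1"
    and bm: "b j \<in> borel_measurable M"
    and D: "distr M borel (\<lambda>\<omega>. (b j \<omega>)\<^sup>2) = distr (chi2_distribution (2 * real j / \<alpha>)) borel (\<lambda>x. \<alpha> / 2 * x)"
  shows "has_bochner_integral M (cc b j) 0"
    and "has_bochner_integral M (\<lambda>\<omega>. (cc b j \<omega>)^2) \<alpha>"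
    and "has_bochner_integral M (\<lambda>\<omega>. (cc b j \<omega>)^4) (3 * \<alpha>^2 + 6 * \<alpha>^3 / real j)"
proof -
  define d where "d = 2 * real j / \<alpha>"
  have d: "d > 0" using a j by (simp add: d_def)
  have jp: "real j > 0" using j by simp
  have Ym: "(\<lambda>\<omega>. (b j \<omega>)\<^sup>2) \<in> borel_measurable M" using bm by measurable
  have cent: "has_bochner_integral M (\<lambda>\<omega>. ((b j \<omega>)\<^sup>2 - real j)^n)
     (\<Sum>k\<le>n. of_nat (n choose k) * (\<alpha>/2)^k * (- real j)^(n-k) * (\<Prod>i<k. (d + 2 * real i)))" for n
  proof -
    have "has_bochner_integral lborel (\<lambda>x. chi2_density d x * ((\<alpha>/2) * x + (- real j))^n)
     (\<Sum>k\<le>n. of_nat (n choose k) * (\<alpha>/2)^k * (- real j)^(n-k) * (\<Prod>i<k. (d + 2 * real i)))"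
      by (rule chi_affine_power[OF d])
    then have "has_bochner_integral lborel (\<lambda>x. chi2_density d x * (\<lambda>y. (y - real j)^n) (\<alpha> / 2 * x))
     (\<Sum>k\<le>n. of_nat (n choose k) * (\<alpha>/2)^k * (- real j)^(n-k) * (\<Prod>i<k. (d + 2 * real i)))"
      by simp
    from hbi_chi[OF d Ym D[folded d_def] _ this] show ?thesis by simp
  qed
  have dd: "\<alpha> / 2 * (d + 2 * real i) = real j + \<alpha> * real i" for i
    using a by (simp add: d_def field_simps)
  have c_eq: "(cc b j \<omega>)^n = ((b j \<omega>)\<^sup>2 - real j)^n / (sqrt (real j))^n" for \<omega> n
    by (simp add: cc_def power_divide)
  have sq2: "(sqrt (real j))^2 = real j" using jp by simp
  have sq4: "(sqrt (real j))^4 = (real j)^2"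
    using sq2 by (metis power_mult numeral_Bit0 mult_2 power2_eq_square numeral_One one_add_one)
  show "has_bochner_integral M (cc b j) 0"
  proof -
    have "has_bochner_integral M (\<lambda>\<omega>. ((b j \<omega>)\<^sup>2 - real j)^1 / (sqrt (real j))^1)
      ((\<Sum>k\<le>1. of_nat (1 choose k) * (\<alpha>/2)^k * (- real j)^(1-k) * (\<Prod>i<k. (d + 2 * real i))) / (sqrt (real j))^1)"
      by (intro has_bochner_integral_divide_zero cent)
    moreover have "(\<Sum>k\<le>1. of_nat (1 choose k) * (\<alpha>/2)^k * (- real j)^(1-k) * (\<Prod>i<k. (d + 2 * real i))) = 0"
      using dd[of 0] by simp
    moreover have "cc b j = (\<lambda>\<omega>. ((b j \<omega>)\<^sup>2 - real j) / sqrt (real j))" by (rule ext) (simp add: cc_def)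
    ultimately show ?thesis by simp
  qed
  show "has_bochner_integral M (\<lambda>\<omega>. (cc b j \<omega>)^2) \<alpha>"
  proof -
    have "has_bochner_integral M (\<lambda>\<omega>. ((b j \<omega>)\<^sup>2 - real j)^2 / (sqrt (real j))^2)
      ((\<Sum>k\<le>2. of_nat (2 choose k) * (\<alpha>/2)^k * (- real j)^(2-k) * (\<Prod>i<k. (d + 2 * real i))) / (sqrt (real j))^2)"
      by (intro has_bochner_integral_divide_zero cent)
    moreover have "(\<Sum>k\<le>2. of_nat (2 choose k) * (\<alpha>/2)^k * (- real j)^(2-k) * (\<Prod>i<k. (d + 2 * real i))) = \<alpha> * real j"
    proof -
      have "(\<Sum>k\<le>2. of_nat (2 choose k) * (\<alpha>/2)^k * (- real j)^(2-k) * (\<Prod>i<k. (d + 2 * real i)))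
        = (real j)^2 - 2 * real j * (\<alpha>/2 * d) + (\<alpha>/2 * d) * (\<alpha>/2 * (d + 2))"
        by (simp add: numeral_2_eq_2 atMost_Suc lessThan_Suc power2_eq_square algebra_simps)
      also have "\<dots> = \<alpha> * real j" using dd[of 0] dd[of 1] by (simp add: algebra_simps power2_eq_square)
      finally show ?thesis .
    qed
    ultimately show ?thesis using c_eq[of _ 2] sq2 jp by simp
  qed
  show "has_bochner_integral M (\<lambda>\<omega>. (cc b j \<omega>)^4) (3 * \<alpha>^2 + 6 * \<alpha>^3 / real j)"
  proof -
    have "has_bochner_integral M (\<lambda>\<omega>. ((b j \<omega>)\<^sup>2 - real j)^4 / (sqrt (real j))^4)
      ((\<Sum>k\<le>4. of_nat (4 choose k) * (\<alpha>/2)^k * (- real j)^(4-k) * (\<Prod>i<k. (d + 2 * real i))) / (sqrt (real j))^4)"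
      by (intro has_bochner_integral_divide_zero cent)
    moreover have "(\<Sum>k\<le>4. of_nat (4 choose k) * (\<alpha>/2)^k * (- real j)^(4-k) * (\<Prod>i<k. (d + 2 * real i)))
        = 3 * \<alpha>^2 * (real j)^2 + 6 * \<alpha>^3 * real j"
    proof -
      have e4: "{..(4::nat)} = {0,1,2,3,4}" by auto
      have p: "(\<alpha>/2)^k * (\<Prod>i<k. (d + 2 * real i)) = (\<Prod>i<k. (real j + \<alpha> * real i))" for k
        by (induction k) (auto simp: dd[symmetric] mult_ac)
      have "(\<Sum>k\<le>4. of_nat (4 choose k) * (\<alpha>/2)^k * (- real j)^(4-k) * (\<Prod>i<k. (d + 2 * real i)))
        = (\<Sum>k\<le>4. of_nat (4 choose k) * (- real j)^(4-k) * (\<Prod>i<k. (real j + \<alpha> * real i)))"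
        by (intro sum.cong refl) (simp add: p[symmetric] mult_ac)
      also have "\<dots> = 3 * \<alpha>^2 * (real j)^2 + 6 * \<alpha>^3 * real j"
      proof -
        have ch: "(4::nat) choose 0 = 1" "(4::nat) choose 1 = 4" "(4::nat) choose 2 = 6" "(4::nat) choose 3 = 4" "(4::nat) choose 4 = 1"
          by (simp_all add: eval_nat_numeral)
        have pr: "(\<Prod>i<(0::nat). (real j + \<alpha> * real i)) = 1"
          "(\<Prod>i<(1::nat). (real j + \<alpha> * real i)) = real j"
          "(\<Prod>i<(2::nat). (real j + \<alpha> * real i)) = real j * (real j + \<alpha>)"
          "(\<Prod>i<(3::nat). (real j + \<alpha> * real i)) = real j * (real j + \<alpha>) * (real j + 2 * \<alpha>)"
          "(\<Prod>i<(4::nat). (real j + \<alpha> * real i)) = real j * (real j + \<alpha>) * (real j + 2 * \<alpha>) * (real j + 3 * \<alpha>)"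
          by (simp_all add: eval_nat_numeral lessThan_Suc mult_ac)
        show ?thesis unfolding e4 by (simp add: ch pr algebra_simps power2_eq_square power3_eq_cube power4_eq_xxxx)
      qed
      finally show ?thesis .
    qed
    moreover have "(3 * \<alpha>^2 * (real j)^2 + 6 * \<alpha>^3 * real j) / (real j)^2 = 3 * \<alpha>^2 + 6 * \<alpha>^3 / real j"
      using jp by (simp add: field_simps power2_eq_square)
    ultimately show ?thesis using c_eq[of _ 4] sq4 by simp
  qed
qed


definition FF :: "real \<Rightarrow> real" where
  "FF x = ln (1 + sqrt (1 - x)) - ln (sqrt (1 - x))"

definition phi :: "real \<Rightarrow> real" where
  "phi x = 1 / (2 * (1 + sqrt (1 - x)) * (1 - x))"

lemma FF_deriv:
  assumes "x < 1" shows "(FF has_real_derivative phi x) (at x)"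
proof -
  have p: "1 - x > 0" using assms by simp
  have sp: "sqrt (1 - x) > 0" using p by simp
  have "(FF has_real_derivative
     (1 / (1 + sqrt (1 - x)) * (inverse (sqrt (1 - x)) / 2 * (-1)) - 1 / sqrt (1 - x) * (inverse (sqrt (1 - x)) / 2 * (-1)))) (at x)"
    unfolding FF_def
    using p sp
    by (auto intro!: derivative_eq_intros simp: add_pos_pos)
  moreover have "(1 / (1 + sqrt (1 - x)) * (inverse (sqrt (1 - x)) / 2 * (-1)) - 1 / sqrt (1 - x) * (inverse (sqrt (1 - x)) / 2 * (-1)))
     = phi x"
  proof -
    define u where "u = sqrt (1 - x)"
    have uu: "u * u = 1 - x" using p by (simp add: u_def)
    have "(1 / (1 + u) * (inverse u / 2 * (-1)) - 1 / u * (inverse u / 2 * (-1))) = 1 / (2 * (1 + u) * (u * u))"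
      using sp unfolding u_def[symmetric] by (simp add: inverse_eq_divide) (simp add: divide_simps)
    then show ?thesis unfolding phi_def u_def[symmetric] uu .
  qed
  ultimately show ?thesis by simp
qed

lemma phi_mono: "a \<le> b \<Longrightarrow> b < 1 \<Longrightarrow> phi a \<le> phi b"
proof -
  assume ab: "a \<le> b" "b < 1"
  have b1: "b \<le> 1" "a \<le> 1" "0 \<le> 1 - b" using ab by auto
  have "sqrt (1 - b) \<le> sqrt (1 - a)" using ab by simp
  moreover have "sqrt (1 - b) \<ge> 0" using b1 by simp
  ultimately have "2 * (1 + sqrt (1 - b)) * (1 - b) \<le> 2 * (1 + sqrt (1 - a)) * (1 - a)"
    using ab b1 by (intro mult_mono) auto
  moreover have "2 * (1 + sqrt (1 - b)) * (1 - b) > 0" using ab by (simp add: add_pos_nonneg)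
  ultimately show "phi a \<le> phi b" unfolding phi_def by (simp add: frac_le)
qed

lemma phi_nonneg: "x < 1 \<Longrightarrow> phi x \<ge> 0"
  unfolding phi_def by (simp add: add_pos_nonneg less_imp_le)

lemma FF_step:
  assumes "a \<le> b" "b < 1"
  shows "(b - a) * phi a \<le> FF b - FF a" and "FF b - FF a \<le> (b - a) * phi b"
proof -
  have "(b - a) * phi a \<le> FF b - FF a \<and> FF b - FF a \<le> (b - a) * phi b"
  proof (cases "a = b")
    case True then show ?thesis by simp
  next
    case False
    then have lt: "a < b" using assms by simp
    obtain z where z: "a < z" "z < b" "FF b - FF a = (b - a) * phi z"
      using MVT2[OF lt, of FF phi] FF_deriv assms by force
    have "phi a \<le> phi z" "phi z \<le> phi b" using z assms by (auto intro!: phi_mono)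
    then show ?thesis using z lt by (auto intro: mult_left_mono)
  qed
  then show "(b - a) * phi a \<le> FF b - FF a" and "FF b - FF a \<le> (b - a) * phi b" by auto
qed

lemma FF_mono: "a \<le> b \<Longrightarrow> b < 1 \<Longrightarrow> FF a \<le> FF b"
  using FF_step(1)[of a b] phi_nonneg[of a] by (smt (verit) mult_nonneg_nonneg)

lemma FF_0: "FF 0 = ln 2" by (simp add: FF_def)

lemma FF_half_le: "FF (1/2) \<le> 2"
proof -
  have s: "sqrt (1/2 :: real) = 1 / sqrt 2" by (simp add: real_sqrt_divide)
  have l: "ln (1 / sqrt 2 :: real) = - ln (sqrt 2)" by (simp add: ln_div)
  have s2: "sqrt 2 \<le> (2::real)" by (simp add: real_sqrt_le_iff[of 2 4, simplified] )
  have "FF (1/2) = ln (1 + 1/sqrt 2) + ln (sqrt 2)"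
    by (simp add: FF_def s l)
  also have "\<dots> \<le> ln 2 + ln 2"
  proof (intro add_mono)
    have "1 \<le> sqrt (2::real)" by simp
    then have "1 / sqrt 2 \<le> (1::real)" by simp
    moreover have "0 < 1 + 1 / sqrt (2::real)" by (simp add: add_pos_pos)
    ultimately show "ln (1 + 1 / sqrt 2) \<le> ln (2::real)" by (subst ln_le_cancel_iff) auto
    show "ln (sqrt 2) \<le> ln (2::real)" using s2 by (subst ln_le_cancel_iff) auto
  qed
  also have "\<dots> \<le> 2" using ln_2_less_1 by simp
  finally show ?thesis .
qed

lemma riemann_upper:
  fixes h :: real assumes h: "h > 0" and m: "1 \<le> m" "m \<le> n" and lt: "real n * h < 1"
  shows "(\<Sum>i=m..n. h * phi ((real i - 1) * h)) \<le> FF (real n * h) - FF ((real m - 1) * h)"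
proof -
  have "(\<Sum>i=m..n. h * phi ((real i - 1) * h)) \<le> (\<Sum>i=m..n. FF ((real (Suc i) - 1) * h) - FF ((real i - 1) * h))"
  proof (intro sum_mono)
    fix i assume i: "i \<in> {m..n}"
    have "real i * h \<le> real n * h" using i h by (auto intro: mult_right_mono)
    then have "(real (Suc i) - 1) * h < 1" using lt by simp
    moreover have "(real (Suc i) - 1) * h - (real i - 1) * h = h" by (simp add: algebra_simps)
    ultimately show "h * phi ((real i - 1) * h) \<le> FF ((real (Suc i) - 1) * h) - FF ((real i - 1) * h)"
      using FF_step(1)[of "(real i - 1) * h" "(real (Suc i) - 1) * h"] h by (simp add: algebra_simps)
  qed
  also have "\<dots> = FF ((real (Suc n) - 1) * h) - FF ((real m - 1) * h)"
    using m by (subst sum_Suc_diff[where f="\<lambda>i. FF ((real i - 1) * h)"]) auto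
  finally show ?thesis by simp
qed

lemma riemann_lower:
  fixes h :: real assumes h: "h > 0" and m: "2 \<le> m" "m \<le> n" and lt: "real n * h < 1"
  shows "FF ((real n - 1) * h) - FF ((real m - 2) * h) \<le> (\<Sum>i=m..n. h * phi ((real i - 1) * h))"
proof -
  have "(\<Sum>i=m..n. FF ((real i - 1) * h) - FF ((real (i - 1) - 1) * h)) \<le> (\<Sum>i=m..n. h * phi ((real i - 1) * h))"
  proof (intro sum_mono)
    fix i assume i: "i \<in> {m..n}"
    have "real i * h \<le> real n * h" using i h by (auto intro: mult_right_mono)
    moreover have "(real i - 1) * h = real i * h - h" by (simp add: algebra_simps)
    ultimately have "(real i - 1) * h < 1" using lt h by linarith
    moreover have "real (i - 1) = real i - 1" using i m by auto
    ultimately show "FF ((real i - 1) * h) - FF ((real (i - 1) - 1) * h) \<le> h * phi ((real i - 1) * h)"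
      using FF_step(2)[of "(real i - 1 - 1) * h" "(real i - 1) * h"] h by (simp add: algebra_simps)
  qed
  moreover have "(\<Sum>i=m..n. FF ((real i - 1) * h) - FF ((real (i - 1) - 1) * h))
      = (\<Sum>i=m-1..n-1. FF ((real (Suc i) - 1) * h) - FF ((real i - 1) * h))"
  proof -
    have "(\<Sum>i=m-1..n-1. FF ((real (Suc i) - 1) * h) - FF ((real i - 1) * h))
        = (\<Sum>i\<in>Suc ` {m-1..n-1}. FF ((real i - 1) * h) - FF ((real (i - 1) - 1) * h))"
      by (subst sum.reindex) auto
    also have "Suc ` {m-1..n-1} = {m..n}" using m
      by (auto simp: image_iff intro!: bexI[of _ "_ - 1"])
    finally show ?thesis by simp
  qed
  moreover have "(\<Sum>i=m-1..n-1. FF ((real (Suc i) - 1) * h) - FF ((real i - 1) * h))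
     = FF ((real (Suc (n-1)) - 1) * h) - FF ((real (m-1) - 1) * h)"
    using m by (intro sum_Suc_diff) auto
  moreover have "real (Suc (n-1)) = real n" "real (m-1) - 1 = real m - 2" using m by auto
  ultimately show ?thesis by simp
qed


definition ss :: "real \<Rightarrow> nat \<Rightarrow> nat \<Rightarrow> real" where
  "ss \<theta> N i = sqrt (1 - (real i - 1) / (real N * \<theta>\<^sup>2))"
definition ff :: "real \<Rightarrow> nat \<Rightarrow> nat \<Rightarrow> real" where
  "ff \<theta> N i = (1 + ss \<theta> N i) / (2 * ss \<theta> N i)"
definition HH :: "real \<Rightarrow> nat \<Rightarrow> nat \<Rightarrow> nat \<Rightarrow> real" where
  "HH \<theta> N i n = (\<Sum>j=i..n. \<Prod>k=Suc i..j. gam \<theta> N k)"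
definition hN :: "real \<Rightarrow> nat \<Rightarrow> real" where
  "hN \<theta> N = 1 / (real N * \<theta>\<^sup>2)"
definition dl :: "real \<Rightarrow> nat \<Rightarrow> real" where
  "dl \<theta> N = hN \<theta> N / (ss \<theta> N N)^3"

lemma rr_ss: "rr \<theta> N i = 1 + ss \<theta> N i" by (simp add: rr_def ss_def)
lemma mm_ss: "mm \<theta> N i = 1 - ss \<theta> N i" by (simp add: mm_def ss_def)
lemma ss_anti: "i \<le> j \<Longrightarrow> ss \<theta> N j \<le> ss \<theta> N i"
  unfolding ss_def by (auto intro!: divide_right_mono simp: zero_le_mult_iff)
lemma HH_self: "HH \<theta> N i i = 1" by (simp add: HH_def)
lemma HH_rec: assumes "i < n" shows "HH \<theta> N i n = 1 + gam \<theta> N (Suc i) * HH \<theta> N (Suc i) n"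
proof -
  have "HH \<theta> N i n = (\<Prod>k=Suc i..i. gam \<theta> N k) + (\<Sum>j=Suc i..n. \<Prod>k=Suc i..j. gam \<theta> N k)"
    unfolding HH_def using assms by (subst sum.atLeast_Suc_atMost) auto
  also have "(\<Sum>j=Suc i..n. \<Prod>k=Suc i..j. gam \<theta> N k) = (\<Sum>j=Suc i..n. gam \<theta> N (Suc i) * (\<Prod>k=Suc (Suc i)..j. gam \<theta> N k))"
    by (intro sum.cong refl) (subst prod.atLeast_Suc_atMost, auto)
  finally show ?thesis by (simp add: HH_def sum_distrib_left)
qed

locale detc =
  fixes \<theta> :: real and N :: nat
  assumes th: "\<theta> > 1" and N3: "N \<ge> 3"
begin

lemma hpos: "hN \<theta> N > 0" using th N3 by (simp add: hN_def)
lemma Nh: "real N * hN \<theta> N = 1 / \<theta>\<^sup>2" using N3 by (simp add: hN_def)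
lemma Nh_lt1: "real N * hN \<theta> N < 1" using th by (simp add: Nh)

lemma ss_sq: "i \<le> N \<Longrightarrow> (ss \<theta> N i)\<^sup>2 = 1 - (real i - 1) * hN \<theta> N"
proof -
  assume i: "i \<le> N"
  have "(real i - 1) * hN \<theta> N \<le> real N * hN \<theta> N" using i hpos by (intro mult_right_mono) auto
  then have "(real i - 1) * hN \<theta> N < 1" using Nh_lt1 by linarith
  then show ?thesis by (simp add: ss_def hN_def)
qed

lemma ss_pos: "i \<le> N \<Longrightarrow> ss \<theta> N i > 0"
proof -
  assume i: "i \<le> N"
  have "(real i - 1) * hN \<theta> N \<le> real N * hN \<theta> N" using i hpos by (intro mult_right_mono) auto
  then have "(real i - 1) * hN \<theta> N < 1" using Nh_lt1 by linarith
  then show ?thesis by (simp add: ss_def hN_def)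
qed

lemma ss_le1: "1 \<le> i \<Longrightarrow> ss \<theta> N i \<le> 1"
  unfolding ss_def using th by (auto simp: zero_le_mult_iff)

lemma ssN_pos: "ss \<theta> N N > 0" by (rule ss_pos) simp
lemma ssN_le: "i \<le> N \<Longrightarrow> ss \<theta> N N \<le> ss \<theta> N i" by (rule ss_anti)
lemma ssN_le1: "ss \<theta> N N \<le> 1" using N3 by (intro ss_le1) simp

lemma gam_eq: "gam \<theta> N i = (1 - ss \<theta> N i) / (1 + ss \<theta> N i)"
  by (simp add: gam_def rr_ss mm_ss)

lemma gam_nonneg: "1 \<le> i \<Longrightarrow> i \<le> N \<Longrightarrow> 0 \<le> gam \<theta> N i"
  using ss_pos[of i] ss_le1[of i] by (simp add: gam_eq)

lemma gam_mono: "i \<le> j \<Longrightarrow> j \<le> N \<Longrightarrow> gam \<theta> N i \<le> gam \<theta> N j"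
proof -
  assume ij: "i \<le> j" "j \<le> N"
  have a: "ss \<theta> N j \<le> ss \<theta> N i" using ij(1) by (rule ss_anti)
  have b: "ss \<theta> N j > 0" using ij by (intro ss_pos) auto
  have "(1 - ss \<theta> N i) * (1 + ss \<theta> N j) \<le> (1 - ss \<theta> N j) * (1 + ss \<theta> N i)"
    using a by (simp add: algebra_simps)
  then show ?thesis using a b by (simp add: gam_eq divide_simps add_pos_pos)
qed

lemma ff_fix: "i \<le> N \<Longrightarrow> gam \<theta> N i * ff \<theta> N i = ff \<theta> N i - 1"
proof -
  assume i: "i \<le> N"
  define s where "s = ss \<theta> N i"
  have s: "s > 0" "1 + s \<noteq> 0" using ss_pos[OF i] by (auto simp: s_def)
  have "(1 - s) / (1 + s) * ((1 + s) / (2 * s)) = (1 - s) / (2 * s)"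
    using s by simp
  also have "\<dots> = (1 + s) / (2 * s) - 1"
    using s by (simp add: divide_simps)
  finally have "(1 - s) / (1 + s) * ((1 + s) / (2 * s)) = (1 + s) / (2 * s) - 1" .
  then show ?thesis by (simp add: gam_eq ff_def s_def)
qed

lemma ff_ge1: "1 \<le> i \<Longrightarrow> i \<le> N \<Longrightarrow> ff \<theta> N i \<ge> 1"
  using ss_pos[of i] ss_le1[of i] by (simp add: ff_def field_simps)

lemma ff_le: "1 \<le> i \<Longrightarrow> i \<le> N \<Longrightarrow> ff \<theta> N i \<le> 1 / ss \<theta> N N"
proof -
  assume i: "1 \<le> i" "i \<le> N"
  have "ff \<theta> N i \<le> 1 / ss \<theta> N i" using ss_pos[of i] ss_le1[of i] i by (simp add: ff_def field_simps)
  also have "\<dots> \<le> 1 / ss \<theta> N N" using ssN_le[of i] ssN_pos i by (simp add: frac_le)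
  finally show ?thesis .
qed

lemma ff_mono: "i \<le> j \<Longrightarrow> j \<le> N \<Longrightarrow> ff \<theta> N i \<le> ff \<theta> N j"
proof -
  assume ij: "i \<le> j" "j \<le> N"
  have a: "ss \<theta> N j \<le> ss \<theta> N i" using ij(1) by (rule ss_anti)
  have b: "ss \<theta> N j > 0" using ij by (intro ss_pos) auto
  have "ff \<theta> N i = 1/2 + 1 / (2 * ss \<theta> N i)" "ff \<theta> N j = 1/2 + 1 / (2 * ss \<theta> N j)"
    using b a by (auto simp: ff_def field_simps)
  moreover have "1 / (2 * ss \<theta> N i) \<le> 1 / (2 * ss \<theta> N j)" using a b by (simp add: frac_le)
  ultimately show ?thesis by simp
qed

lemma ss_step: "1 \<le> i \<Longrightarrow> i < N \<Longrightarrow> ss \<theta> N i - ss \<theta> N (Suc i) \<le> hN \<theta> N / (2 * ss \<theta> N N)"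
proof -
  assume i: "1 \<le> i" "i < N"
  define a where "a = ss \<theta> N i"
  define b where "b = ss \<theta> N (Suc i)"
  have ap: "a > 0" "b > 0" using i by (auto simp: a_def b_def intro!: ss_pos)
  have ab: "a\<^sup>2 - b\<^sup>2 = hN \<theta> N" using i by (simp add: a_def b_def ss_sq algebra_simps)
  have "a - b = (a\<^sup>2 - b\<^sup>2) / (a + b)" using ap by (simp add: power2_eq_square field_simps)
  also have "\<dots> = hN \<theta> N / (a + b)" by (simp add: ab)
  also have "\<dots> \<le> hN \<theta> N / (2 * ss \<theta> N N)"
    using ssN_le[of i] ssN_le[of "Suc i"] i ssN_pos hpos unfolding a_def b_def
    by (intro divide_left_mono) auto
  finally show ?thesis by (simp add: a_def b_def)
qed

lemma ff_step: "1 \<le> i \<Longrightarrow> i < N \<Longrightarrow> ff \<theta> N (Suc i) - ff \<theta> N i \<le> dl \<theta> N"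
proof -
  assume i: "1 \<le> i" "i < N"
  define a where "a = ss \<theta> N i"
  define b where "b = ss \<theta> N (Suc i)"
  define c where "c = ss \<theta> N N"
  have ap: "a > 0" "b > 0" "c > 0" using i by (auto simp: a_def b_def c_def intro!: ss_pos)
  have ca: "c \<le> a" "c \<le> b" using i by (auto simp: a_def b_def c_def intro!: ssN_le)
  have st: "a - b \<le> hN \<theta> N / (2 * c)" using ss_step[OF i] by (simp add: a_def b_def c_def)
  have "ff \<theta> N (Suc i) - ff \<theta> N i = (a - b) / (2 * a * b)"
    using ap by (simp add: ff_def a_def[symmetric] b_def[symmetric] field_simps)
  also have "\<dots> \<le> (hN \<theta> N / (2 * c)) / (2 * a * b)"
    using st ap by (intro divide_right_mono) auto
  also have "\<dots> \<le> (hN \<theta> N / (2 * c)) / (2 * c * c)"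
    using ap ca hpos by (intro divide_left_mono mult_mono) auto
  also have "\<dots> \<le> hN \<theta> N / c^3"
    using ap hpos by (simp add: field_simps power3_eq_cube)
  finally show ?thesis by (simp add: dl_def c_def)
qed

lemma HH_upper:
  assumes d: "dl \<theta> N < 1" and i: "1 \<le> i" "i \<le> N"
  shows "HH \<theta> N i N \<le> ff \<theta> N i / (1 - dl \<theta> N)"
  using i(2,1)
proof (induction i rule: inc_induct)
  case base
  have "dl \<theta> N \<ge> 0" using hpos ssN_pos by (simp add: dl_def)
  then have "1 - dl \<theta> N \<le> ff \<theta> N N" using ff_ge1[of N] N3 by simp
  then have "1 \<le> ff \<theta> N N / (1 - dl \<theta> N)"
    using d by (simp add: le_divide_eq)
  then show ?case by (simp add: HH_self)
next
  case (step n)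
  have g0: "0 \<le> gam \<theta> N (Suc n)" using step by (intro gam_nonneg) auto
  have "HH \<theta> N n N = 1 + gam \<theta> N (Suc n) * HH \<theta> N (Suc n) N" using step by (intro HH_rec) auto
  also have "\<dots> \<le> 1 + gam \<theta> N (Suc n) * (ff \<theta> N (Suc n) / (1 - dl \<theta> N))"
    using step g0 by (intro add_left_mono mult_left_mono) auto
  also have "\<dots> = 1 + (ff \<theta> N (Suc n) - 1) / (1 - dl \<theta> N)"
    using ff_fix[of "Suc n"] step by (simp add: mult.assoc[symmetric] times_divide_eq_right[symmetric])
  also have "\<dots> = (ff \<theta> N (Suc n) - dl \<theta> N) / (1 - dl \<theta> N)"
    using d by (simp add: field_simps)
  also have "\<dots> \<le> ff \<theta> N n / (1 - dl \<theta> N)"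
    using ff_step[of n] step d by (intro divide_right_mono) auto
  finally show ?case .
qed

lemma HH_nonneg: "1 \<le> i \<Longrightarrow> n \<le> N \<Longrightarrow> 0 \<le> HH \<theta> N i n"
  unfolding HH_def
  by (intro sum_nonneg prod_nonneg) (auto intro!: gam_nonneg)
end


context detc begin

lemma HH_lower:
  assumes i: "1 \<le> i" "i \<le> N"
  shows "ff \<theta> N i - (ff \<theta> N N - 1) * (\<Prod>k=Suc i..N. gam \<theta> N k) \<le> HH \<theta> N i N"
  using i(2,1)
proof (induction i rule: inc_induct)
  case base
  then show ?case by (simp add: HH_self)
next
  case (step n)
  have g0: "0 \<le> gam \<theta> N (Suc n)" using step by (intro gam_nonneg) auto
  have "ff \<theta> N n - (ff \<theta> N N - 1) * (\<Prod>k=Suc n..N. gam \<theta> N k)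
     \<le> ff \<theta> N (Suc n) - (ff \<theta> N N - 1) * (gam \<theta> N (Suc n) * (\<Prod>k=Suc (Suc n)..N. gam \<theta> N k))"
    using ff_mono[of n "Suc n"] step by (subst prod.atLeast_Suc_atMost) auto
  also have "\<dots> = 1 + gam \<theta> N (Suc n) * (ff \<theta> N (Suc n) - (ff \<theta> N N - 1) * (\<Prod>k=Suc (Suc n)..N. gam \<theta> N k))"
    using ff_fix[of "Suc n"] step by (simp add: algebra_simps)
  also have "\<dots> \<le> 1 + gam \<theta> N (Suc n) * HH \<theta> N (Suc n) N"
    using step g0 by (intro add_left_mono mult_left_mono) auto
  also have "\<dots> = HH \<theta> N n N" using step by (intro HH_rec[symmetric]) auto
  finally show ?case .
qed

lemma prod_gam_le: "1 \<le> i \<Longrightarrow> i \<le> N \<Longrightarrow> (\<Prod>k=Suc i..N. gam \<theta> N k) \<le> gam \<theta> N N ^ (N - i)"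
proof -
  assume i: "1 \<le> i" "i \<le> N"
  have "(\<Prod>k=Suc i..N. gam \<theta> N k) \<le> (\<Prod>k=Suc i..N. gam \<theta> N N)"
    using i by (intro prod_mono) (auto intro!: gam_nonneg gam_mono)
  also have "\<dots> = gam \<theta> N N ^ (N - i)" by simp
  finally show ?thesis .
qed

lemma gamN_lt1: "gam \<theta> N N < 1"
  using ssN_pos by (simp add: gam_eq)

lemma geo_sum: "(\<Sum>i=3..N. gam \<theta> N N ^ (N - i)) \<le> 1 / ss \<theta> N N"
proof -
  define g where "g = gam \<theta> N N"
  have g: "0 \<le> g" "g < 1" using gamN_lt1 gam_nonneg[of N] N3 by (auto simp: g_def)
  have "(\<Sum>i=3..N. g ^ (N - i)) = (\<Sum>k\<in>(\<lambda>i. N - i) ` {3..N}. g ^ k)"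
    by (subst sum.reindex) (auto simp: inj_on_def)
  also have "\<dots> \<le> (\<Sum>k<N. g ^ k)"
    using g by (intro sum_mono2) auto
  also have "\<dots> = (1 - g ^ N) / (1 - g)" using g by (simp add: sum_gp_strict)
  also have "\<dots> \<le> 1 / (1 - g)" using g by (intro divide_right_mono) auto
  also have "1 / (1 - g) = (1 + ss \<theta> N N) / (2 * ss \<theta> N N)"
    using ssN_pos by (simp add: g_def gam_eq field_simps)
  also have "\<dots> \<le> 1 / ss \<theta> N N"
    using ssN_pos ssN_le1 by (simp add: field_simps)
  finally show ?thesis by (simp add: g_def)
qed

end

definition pp :: "real \<Rightarrow> nat \<Rightarrow> nat \<Rightarrow> real" where
  "pp \<theta> N i = 1 / (sqrt (real N) * \<theta> * rr \<theta> N i)"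
definition qq :: "real \<Rightarrow> nat \<Rightarrow> nat \<Rightarrow> real" where
  "qq \<theta> N i = sqrt (mm \<theta> N i / rr \<theta> N i) / (sqrt (real N) * \<theta> * rr \<theta> N (i - 1))"
definition VV :: "real \<Rightarrow> nat \<Rightarrow> real" where
  "VV \<theta> N = (\<Sum>i=3..N. ((pp \<theta> N i)\<^sup>2 + (qq \<theta> N i)\<^sup>2) * (HH \<theta> N i N)\<^sup>2)"
definition EE :: "real \<Rightarrow> nat \<Rightarrow> nat \<Rightarrow> real" where
  "EE \<theta> N i = (ff \<theta> N N - 1) * (\<Prod>k=Suc i..N. gam \<theta> N k)"

lemma alg_TT: "(t::real) > 0 \<Longrightarrow> s > 0 \<Longrightarrow> 2 / t^3 * (t / (2 * s))\<^sup>2 = 1 / (2 * t * s\<^sup>2)"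
  by (simp add: power2_eq_square power3_eq_cube field_simps)

lemma alg_pq: "(r::real) > 0 \<Longrightarrow> h / r\<^sup>2 + (m / r) * h / r\<^sup>2 = (r + m) * h / r^3"
  by (simp add: power2_eq_square power3_eq_cube field_simps)
lemma alg_pq2: "(r::real) > 0 \<Longrightarrow> c > 0 \<Longrightarrow> ((r + m) * h / r^3) / c\<^sup>2 = h / (r * c)\<^sup>2 + (m / r) * h / (r * c)\<^sup>2"
  by (simp add: power2_eq_square power3_eq_cube field_simps)

context detc begin

lemma dl_nonneg: "dl \<theta> N \<ge> 0" using hpos ssN_pos by (simp add: dl_def)

lemma rr_ge1: "i \<le> N \<Longrightarrow> rr \<theta> N i \<ge> 1" using ss_pos[of i] by (simp add: rr_ss)
lemma mr_nonneg: "1 \<le> i \<Longrightarrow> i \<le> N \<Longrightarrow> mm \<theta> N i / rr \<theta> N i \<ge> 0"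
  using ss_pos[of i] ss_le1[of i] by (simp add: rr_ss mm_ss)

lemma sqN: "(sqrt (real N) * \<theta>)\<^sup>2 = 1 / hN \<theta> N"
  using N3 by (simp add: hN_def power_mult_distrib)

lemma pp_sq: "i \<le> N \<Longrightarrow> (pp \<theta> N i)\<^sup>2 = hN \<theta> N / (rr \<theta> N i)\<^sup>2"
  using N3 by (simp add: pp_def hN_def power_divide power_mult_distrib)

lemma qq_sq: "3 \<le> i \<Longrightarrow> i \<le> N \<Longrightarrow> (qq \<theta> N i)\<^sup>2 = (mm \<theta> N i / rr \<theta> N i) * hN \<theta> N / (rr \<theta> N (i - 1))\<^sup>2"
proof -
  assume i: "3 \<le> i" "i \<le> N"
  have "(qq \<theta> N i)\<^sup>2 = (mm \<theta> N i / rr \<theta> N i) / ((sqrt (real N) * \<theta>)\<^sup>2 * (rr \<theta> N (i - 1))\<^sup>2)"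
    using mr_nonneg[of i] i by (simp add: qq_def power_divide power_mult_distrib)
  then show ?thesis using sqN hpos by simp
qed

lemma TT_eq: "i \<le> N \<Longrightarrow> hN \<theta> N * phi ((real i - 1) * hN \<theta> N) = 2 * hN \<theta> N / (rr \<theta> N i)^3 * (ff \<theta> N i)\<^sup>2"
proof -
  assume i: "i \<le> N"
  define s where "s = ss \<theta> N i"
  have s: "s > 0" using ss_pos[OF i] by (simp add: s_def)
  have e1: "sqrt (1 - (real i - 1) * hN \<theta> N) = s" by (simp add: s_def ss_def hN_def)
  have e2: "1 - (real i - 1) * hN \<theta> N = s\<^sup>2" using ss_sq[OF i] by (simp add: s_def)
  have "phi ((real i - 1) * hN \<theta> N) = 1 / (2 * (1 + s) * s\<^sup>2)"
    unfolding phi_def by (subst e1, subst e2, rule refl)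
  moreover have "2 / (1 + s)^3 * ((1 + s) / (2 * s))\<^sup>2 = 1 / (2 * (1 + s) * s\<^sup>2)"
    using s by (intro alg_TT) auto
  ultimately have "hN \<theta> N * phi ((real i - 1) * hN \<theta> N) = hN \<theta> N * (2 / (1 + s)^3 * ((1 + s) / (2 * s))\<^sup>2)"
    by simp
  also have "\<dots> = 2 * hN \<theta> N / (1 + s)^3 * ((1 + s) / (2 * s))\<^sup>2" by (simp add: times_divide_eq_left times_divide_eq_right)
  finally show ?thesis by (simp add: rr_ss ff_def s_def[symmetric])
qed

lemma rr_prev: assumes i: "3 \<le> i" "i \<le> N"
  shows "rr \<theta> N i \<le> rr \<theta> N (i - 1)" "rr \<theta> N (i - 1) \<le> rr \<theta> N i * (1 + dl \<theta> N)"
proof -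
  show "rr \<theta> N i \<le> rr \<theta> N (i - 1)" by (simp add: rr_ss ss_anti)
  have st: "ss \<theta> N (i - 1) - ss \<theta> N (Suc (i - 1)) \<le> hN \<theta> N / (2 * ss \<theta> N N)"
    using i by (intro ss_step) auto
  have "hN \<theta> N / (2 * ss \<theta> N N) \<le> dl \<theta> N"
  proof -
    have "(ss \<theta> N N)^3 \<le> 2 * ss \<theta> N N"
    proof -
      have "ss \<theta> N N * ss \<theta> N N \<le> 1" using ssN_pos ssN_le1 by (simp add: mult_le_one)
      then have "ss \<theta> N N * ss \<theta> N N \<le> 2" by simp
      then show ?thesis using ssN_pos by (simp add: power3_eq_cube)
    qed
    then show ?thesis unfolding dl_def using hpos ssN_pos by (intro divide_left_mono) auto
  qed
  then have "rr \<theta> N (i - 1) \<le> rr \<theta> N i + dl \<theta> N" using st i by (simp add: rr_ss)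
  also have "\<dots> \<le> rr \<theta> N i * (1 + dl \<theta> N)"
    using rr_ge1[of i] i dl_nonneg mult_left_mono[of 1 "rr \<theta> N i" "dl \<theta> N"] by (simp add: algebra_simps)
  finally show "rr \<theta> N (i - 1) \<le> rr \<theta> N i * (1 + dl \<theta> N)" .
qed

lemma pq_upper: assumes i: "3 \<le> i" "i \<le> N"
  shows "(pp \<theta> N i)\<^sup>2 + (qq \<theta> N i)\<^sup>2 \<le> 2 * hN \<theta> N / (rr \<theta> N i)^3"
proof -
  have r1: "rr \<theta> N i \<ge> 1" using rr_ge1 i by simp
  have "(qq \<theta> N i)\<^sup>2 \<le> (mm \<theta> N i / rr \<theta> N i) * hN \<theta> N / (rr \<theta> N i)\<^sup>2"
    unfolding qq_sq[OF i] using rr_prev(1)[OF i] r1 mr_nonneg[of i] i hpos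
    by (intro divide_left_mono power_mono mult_nonneg_nonneg mult_pos_pos) auto
  moreover have "hN \<theta> N / (rr \<theta> N i)\<^sup>2 + (mm \<theta> N i / rr \<theta> N i) * hN \<theta> N / (rr \<theta> N i)\<^sup>2 = 2 * hN \<theta> N / (rr \<theta> N i)^3"
    using r1 alg_pq[of "rr \<theta> N i" "hN \<theta> N" "mm \<theta> N i"] by (simp add: rr_ss mm_ss)
  ultimately show ?thesis using pp_sq[of i] i by simp
qed

lemma pq_lower: assumes i: "3 \<le> i" "i \<le> N"
  shows "(2 * hN \<theta> N / (rr \<theta> N i)^3) / (1 + dl \<theta> N)\<^sup>2 \<le> (pp \<theta> N i)\<^sup>2 + (qq \<theta> N i)\<^sup>2"
proof -
  have r1: "rr \<theta> N i \<ge> 1" using rr_ge1 i by simp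
  have d: "1 + dl \<theta> N \<ge> 1" using dl_nonneg by simp
  have A: "(mm \<theta> N i / rr \<theta> N i) * hN \<theta> N / (rr \<theta> N i * (1 + dl \<theta> N))\<^sup>2 \<le> (qq \<theta> N i)\<^sup>2"
    unfolding qq_sq[OF i] using rr_prev[OF i] r1 mr_nonneg[of i] i hpos d
    by (intro divide_left_mono power_mono mult_nonneg_nonneg mult_pos_pos) auto
  have "hN \<theta> N / (rr \<theta> N i * (1 + dl \<theta> N))\<^sup>2 \<le> hN \<theta> N / (rr \<theta> N i)\<^sup>2"
    using i r1 hpos d mult_left_mono[of 1 "1 + dl \<theta> N" "rr \<theta> N i"]
    by (intro divide_left_mono power_mono mult_pos_pos) auto
  then have B: "hN \<theta> N / (rr \<theta> N i * (1 + dl \<theta> N))\<^sup>2 \<le> (pp \<theta> N i)\<^sup>2"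
    using pp_sq[of i] i by simp
  have "(2 * hN \<theta> N / (rr \<theta> N i)^3) / (1 + dl \<theta> N)\<^sup>2 =
     hN \<theta> N / (rr \<theta> N i * (1 + dl \<theta> N))\<^sup>2 + (mm \<theta> N i / rr \<theta> N i) * hN \<theta> N / (rr \<theta> N i * (1 + dl \<theta> N))\<^sup>2"
    using r1 d alg_pq2[of "rr \<theta> N i" "1 + dl \<theta> N" "mm \<theta> N i" "hN \<theta> N"] by (simp add: rr_ss mm_ss)
  then show ?thesis using A B by simp
qed

lemma pp_le: "3 \<le> i \<Longrightarrow> i \<le> N \<Longrightarrow> (pp \<theta> N i)\<^sup>2 \<le> hN \<theta> N"
proof -
  assume i: "3 \<le> i" "i \<le> N"
  have "hN \<theta> N / (rr \<theta> N i)\<^sup>2 \<le> hN \<theta> N / 1"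
    using rr_ge1[of i] i hpos by (intro divide_left_mono) (auto simp: one_le_power)
  then show ?thesis using pp_sq[of i] i by simp
qed

lemma qq_le: "3 \<le> i \<Longrightarrow> i \<le> N \<Longrightarrow> (qq \<theta> N i)\<^sup>2 \<le> hN \<theta> N"
proof -
  assume i: "3 \<le> i" "i \<le> N"
  have "mm \<theta> N i / rr \<theta> N i \<le> 1" using ss_pos[of i] i by (simp add: rr_ss mm_ss)
  then have a: "(mm \<theta> N i / rr \<theta> N i) * hN \<theta> N \<le> hN \<theta> N"
    using hpos mult_right_mono[of "mm \<theta> N i / rr \<theta> N i" 1 "hN \<theta> N"] by simp
  have b: "(rr \<theta> N (i - 1))\<^sup>2 \<ge> 1" using rr_ge1[of "i - 1"] i by (simp add: one_le_power)
  have "(mm \<theta> N i / rr \<theta> N i) * hN \<theta> N / (rr \<theta> N (i - 1))\<^sup>2 \<le> hN \<theta> N / (rr \<theta> N (i - 1))\<^sup>2"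
    using a b by (intro divide_right_mono) auto
  also have "\<dots> \<le> hN \<theta> N / 1" using b hpos by (intro divide_left_mono) auto
  finally show ?thesis using qq_sq[OF i] by simp
qed

lemma term_upper: assumes i: "3 \<le> i" "i \<le> N" and d: "dl \<theta> N < 1"
  shows "((pp \<theta> N i)\<^sup>2 + (qq \<theta> N i)\<^sup>2) * (HH \<theta> N i N)\<^sup>2 \<le> hN \<theta> N * phi ((real i - 1) * hN \<theta> N) / (1 - dl \<theta> N)\<^sup>2"
proof -
  have H: "0 \<le> HH \<theta> N i N" "HH \<theta> N i N \<le> ff \<theta> N i / (1 - dl \<theta> N)"
    using i d by (auto intro!: HH_nonneg HH_upper)
  have "((pp \<theta> N i)\<^sup>2 + (qq \<theta> N i)\<^sup>2) * (HH \<theta> N i N)\<^sup>2 \<le> (2 * hN \<theta> N / (rr \<theta> N i)^3) * (ff \<theta> N i / (1 - dl \<theta> N))\<^sup>2"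
    using pq_upper[OF i] H hpos rr_ge1[of i] i by (intro mult_mono power_mono) auto
  also have "\<dots> = hN \<theta> N * phi ((real i - 1) * hN \<theta> N) / (1 - dl \<theta> N)\<^sup>2"
    using TT_eq[of i] i by (simp add: power_divide)
  finally show ?thesis .
qed

lemma term_lower: assumes i: "3 \<le> i" "i \<le> N"
  shows "hN \<theta> N * phi ((real i - 1) * hN \<theta> N) / (1 + dl \<theta> N)\<^sup>2 - 4 * hN \<theta> N * ff \<theta> N i * EE \<theta> N i
     \<le> ((pp \<theta> N i)\<^sup>2 + (qq \<theta> N i)\<^sup>2) * (HH \<theta> N i N)\<^sup>2"
proof -
  define P where "P = (pp \<theta> N i)\<^sup>2 + (qq \<theta> N i)\<^sup>2"
  define f where "f = ff \<theta> N i"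
  define E where "E = EE \<theta> N i"
  define H where "H = HH \<theta> N i N"
  have E0: "E \<ge> 0" unfolding E_def EE_def using ff_ge1[of N] N3
    by (intro mult_nonneg_nonneg prod_nonneg) (auto intro!: gam_nonneg)
  have f0: "f \<ge> 1" using ff_ge1[of i] i by (simp add: f_def)
  have H0: "H \<ge> 0" using i by (auto simp: H_def intro!: HH_nonneg)
  have HL: "f - E \<le> H" using HH_lower[of i] i by (simp add: f_def E_def H_def EE_def)
  have H2: "f\<^sup>2 - 2 * f * E \<le> H\<^sup>2"
  proof (cases "f - E \<ge> 0")
    case True
    then have "(f - E)\<^sup>2 \<le> H\<^sup>2" using HL by (intro power_mono) auto
    moreover have "f\<^sup>2 - 2 * f * E \<le> (f - E)\<^sup>2" by (simp add: power2_eq_square algebra_simps)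
    ultimately show ?thesis by linarith
  next
    case False
    then have "f\<^sup>2 - 2 * f * E \<le> 0" using f0 E0 by (simp add: power2_eq_square algebra_simps)
    then show ?thesis by (smt (verit) zero_le_power2)
  qed
  have P0: "P \<ge> 0" by (simp add: P_def)
  have Pu: "P \<le> 2 * hN \<theta> N"
  proof -
    have "P \<le> 2 * hN \<theta> N / (rr \<theta> N i)^3" using pq_upper[OF i] by (simp add: P_def)
    also have "\<dots> \<le> 2 * hN \<theta> N / 1" using rr_ge1[of i] i hpos by (intro divide_left_mono) (auto simp: one_le_power)
    finally show ?thesis by simp
  qed
  have Pl: "(2 * hN \<theta> N / (rr \<theta> N i)^3) / (1 + dl \<theta> N)\<^sup>2 \<le> P" using pq_lower[OF i] by (simp add: P_def)
  have T: "hN \<theta> N * phi ((real i - 1) * hN \<theta> N) / (1 + dl \<theta> N)\<^sup>2 = ((2 * hN \<theta> N / (rr \<theta> N i)^3) / (1 + dl \<theta> N)\<^sup>2) * f\<^sup>2"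
    using TT_eq[of i] i by (simp add: f_def)
  have "((2 * hN \<theta> N / (rr \<theta> N i)^3) / (1 + dl \<theta> N)\<^sup>2) * f\<^sup>2 \<le> P * f\<^sup>2"
    using Pl by (intro mult_right_mono) auto
  moreover have "P * (2 * f * E) \<le> (2 * hN \<theta> N) * (2 * f * E)"
    using Pu f0 E0 by (intro mult_right_mono) auto
  moreover have "P * (f\<^sup>2 - 2 * f * E) \<le> P * H\<^sup>2" using H2 P0 by (intro mult_left_mono)
  ultimately have "((2 * hN \<theta> N / (rr \<theta> N i)^3) / (1 + dl \<theta> N)\<^sup>2) * f\<^sup>2 - 4 * hN \<theta> N * f * E \<le> P * H\<^sup>2"
    by (simp add: algebra_simps)
  then show ?thesis unfolding T by (simp add: P_def f_def E_def H_def)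
qed

lemma EE_sum: "(\<Sum>i=3..N. 4 * hN \<theta> N * ff \<theta> N i * EE \<theta> N i) \<le> 2 * dl \<theta> N"
proof -
  define c where "c = ss \<theta> N N"
  have c: "c > 0" "c \<le> 1" using ssN_pos ssN_le1 by (auto simp: c_def)
  have ffN: "ff \<theta> N N - 1 \<le> 1 / (2 * c)" using c by (simp add: ff_def c_def[symmetric] field_simps)
  have ffN0: "ff \<theta> N N - 1 \<ge> 0" using ff_ge1[of N] N3 by simp
  have "(\<Sum>i=3..N. 4 * hN \<theta> N * ff \<theta> N i * EE \<theta> N i) \<le> (\<Sum>i=3..N. 4 * hN \<theta> N * (1 / c) * ((1 / (2 * c)) * gam \<theta> N N ^ (N - i)))"
  proof (intro sum_mono)
    fix i assume i: "i \<in> {3..N}"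
    have pg: "0 \<le> (\<Prod>k=Suc i..N. gam \<theta> N k)" by (intro prod_nonneg) (auto intro!: gam_nonneg)
    have "EE \<theta> N i \<le> (1 / (2 * c)) * gam \<theta> N N ^ (N - i)"
      unfolding EE_def using ffN ffN0 prod_gam_le[of i] i pg c
      by (intro mult_mono) auto
    moreover have "ff \<theta> N i \<le> 1 / c" using ff_le[of i] i by (simp add: c_def)
    moreover have "EE \<theta> N i \<ge> 0" unfolding EE_def using ffN0 pg by simp
    moreover have "ff \<theta> N i \<ge> 0" using ff_ge1[of i] i by simp
    ultimately show "4 * hN \<theta> N * ff \<theta> N i * EE \<theta> N i \<le> 4 * hN \<theta> N * (1 / c) * ((1 / (2 * c)) * gam \<theta> N N ^ (N - i))"
    proof -
      assume a: "EE \<theta> N i \<le> 1 / (2 * c) * gam \<theta> N N ^ (N - i)" "ff \<theta> N i \<le> 1 / c" "0 \<le> EE \<theta> N i" "0 \<le> ff \<theta> N i"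
      have "ff \<theta> N i * EE \<theta> N i \<le> (1 / c) * (1 / (2 * c) * gam \<theta> N N ^ (N - i))"
        using a c by (intro mult_mono) auto
      then have "4 * hN \<theta> N * (ff \<theta> N i * EE \<theta> N i) \<le> 4 * hN \<theta> N * ((1 / c) * (1 / (2 * c) * gam \<theta> N N ^ (N - i)))"
        using hpos by (intro mult_left_mono) auto
      then show ?thesis by (simp add: mult.assoc)
    qed
  qed
  also have "\<dots> = 4 * hN \<theta> N * (1 / c) * (1 / (2 * c)) * (\<Sum>i=3..N. gam \<theta> N N ^ (N - i))"
    by (simp add: sum_distrib_left mult.assoc)
  also have "\<dots> \<le> 4 * hN \<theta> N * (1 / c) * (1 / (2 * c)) * (1 / c)"
    using geo_sum hpos c by (intro mult_left_mono) (auto simp: c_def)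
  also have "\<dots> = 2 * dl \<theta> N" using c by (simp add: dl_def c_def[symmetric] power3_eq_cube field_simps)
  finally show ?thesis .
qed
end

definition DD :: "real \<Rightarrow> real" where "DD \<theta> = FF (1 / \<theta>\<^sup>2) - ln 2"

lemma DD_eq: assumes th: "\<theta> > 1"
  shows "DD \<theta> = ln ((\<theta> + sqrt (\<theta>\<^sup>2 - 1)) / (2 * sqrt (\<theta>\<^sup>2 - 1)))"
proof -
  have t2: "\<theta>\<^sup>2 > 1" using th by (simp add: one_less_power)
  define w where "w = sqrt (\<theta>\<^sup>2 - 1)"
  have w: "w > 0" using t2 by (simp add: w_def)
  have u: "sqrt (1 - 1 / \<theta>\<^sup>2) = w / \<theta>"
  proof -
    have "1 - 1 / \<theta>\<^sup>2 = (\<theta>\<^sup>2 - 1) / \<theta>\<^sup>2" using th by (simp add: field_simps)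
    then show ?thesis using th by (simp add: w_def real_sqrt_divide)
  qed
  have "DD \<theta> = ln (1 + w / \<theta>) - ln (w / \<theta>) - ln 2" by (simp add: DD_def FF_def u)
  also have "\<dots> = ln ((1 + w / \<theta>) / (2 * (w / \<theta>)))"
  proof -
    have p1: "1 + w / \<theta> > 0" using w th by (simp add: add_pos_pos)
    have p2: "w / \<theta> > 0" using w th by simp
    have "ln ((1 + w / \<theta>) / (2 * (w / \<theta>))) = ln (1 + w / \<theta>) - ln (2 * (w / \<theta>))"
      using p1 p2 by (intro ln_divide_pos) auto
    also have "ln (2 * (w / \<theta>)) = ln 2 + ln (w / \<theta>)" using p2 by (intro ln_mult_pos) auto
    finally show ?thesis by simp
  qed
  also have "(1 + w / \<theta>) / (2 * (w / \<theta>)) = (\<theta> + w) / (2 * w)"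
    using th w by (simp add: field_simps)
  finally show ?thesis by (simp add: w_def)
qed

context detc begin

lemma sumT_upper: "(\<Sum>i=3..N. hN \<theta> N * phi ((real i - 1) * hN \<theta> N)) \<le> DD \<theta>"
proof -
  have "(\<Sum>i=3..N. hN \<theta> N * phi ((real i - 1) * hN \<theta> N)) \<le> FF (real N * hN \<theta> N) - FF ((real 3 - 1) * hN \<theta> N)"
    using hpos N3 Nh_lt1 by (intro riemann_upper) auto
  moreover have "FF 0 \<le> FF ((real 3 - 1) * hN \<theta> N)"
  proof (rule FF_mono)
    show "0 \<le> (real 3 - 1) * hN \<theta> N" using hpos by simp
    have "(real 3 - 1) * hN \<theta> N \<le> real N * hN \<theta> N" using N3 hpos by (intro mult_right_mono) auto
    then show "(real 3 - 1) * hN \<theta> N < 1" using Nh_lt1 by linarith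
  qed
  moreover have "real N * hN \<theta> N = 1 / \<theta>\<^sup>2" by (rule Nh)
  ultimately show ?thesis by (simp add: DD_def FF_0)
qed
lemma hphi_bound: "hN \<theta> N * phi (1 / \<theta>\<^sup>2) \<le> 1 / (real N * (\<theta>\<^sup>2 - 1))"
proof -
  have t2: "\<theta>\<^sup>2 > 1" using th by (simp add: one_less_power)
  have "1 / \<theta>\<^sup>2 < 1" using t2 by (auto simp: divide_less_eq_1)
  then have p: "1 - 1 / \<theta>\<^sup>2 > 0" by simp
  have "phi (1 / \<theta>\<^sup>2) \<le> 1 / (1 - 1 / \<theta>\<^sup>2)"
  proof -
    have "1 \<le> 2 * (1 + sqrt (1 - 1 / \<theta>\<^sup>2))" using p by simp
    then have "1 * (1 - 1 / \<theta>\<^sup>2) \<le> 2 * (1 + sqrt (1 - 1 / \<theta>\<^sup>2)) * (1 - 1 / \<theta>\<^sup>2)"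
      using p by (intro mult_right_mono) auto
    moreover have pos: "0 < 2 * (1 + sqrt (1 - 1 / \<theta>\<^sup>2)) * (1 - 1 / \<theta>\<^sup>2)"
      using p by (intro mult_pos_pos) (auto simp: add_pos_nonneg)
    ultimately show ?thesis unfolding phi_def using p mult_pos_pos[OF pos p] by (intro divide_left_mono) auto
  qed
  then have "hN \<theta> N * phi (1 / \<theta>\<^sup>2) \<le> hN \<theta> N * (1 / (1 - 1 / \<theta>\<^sup>2))"
    using hpos by (intro mult_left_mono) auto
  also have "\<dots> = 1 / (real N * (\<theta>\<^sup>2 - 1))"
    using t2 N3 th by (simp add: hN_def field_simps)
  finally show ?thesis .
qed

lemma sumT_lower: "DD \<theta> - 2 - 1 / (real N * (\<theta>\<^sup>2 - 1)) \<le> (\<Sum>i=3..N. hN \<theta> N * phi ((real i - 1) * hN \<theta> N))"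
proof -
  have A: "FF ((real N - 1) * hN \<theta> N) - FF ((real 3 - 2) * hN \<theta> N) \<le> (\<Sum>i=3..N. hN \<theta> N * phi ((real i - 1) * hN \<theta> N))"
    using hpos N3 Nh_lt1 by (intro riemann_lower) auto
  have B: "FF (real N * hN \<theta> N) - FF ((real N - 1) * hN \<theta> N) \<le> (real N * hN \<theta> N - (real N - 1) * hN \<theta> N) * phi (real N * hN \<theta> N)"
    using hpos Nh_lt1 by (intro FF_step(2)) (auto simp: algebra_simps)
  have C: "FF ((real 3 - 2) * hN \<theta> N) \<le> 2"
  proof -
    have t1: "\<theta>\<^sup>2 \<ge> 1" using th by (simp add: one_le_power)
    have "real N * 1 \<le> real N * \<theta>\<^sup>2" using t1 by (intro mult_left_mono) auto
    moreover have "real N \<ge> 3" using N3 by simp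
    ultimately have "2 \<le> real N * \<theta>\<^sup>2" by linarith
    then have "hN \<theta> N \<le> 1/2" unfolding hN_def by (intro frac_le) auto
    then have "FF (hN \<theta> N) \<le> FF (1/2)" by (intro FF_mono) auto
    then show ?thesis using FF_half_le by simp
  qed
  have e: "real N * hN \<theta> N - (real N - 1) * hN \<theta> N = hN \<theta> N" by (simp add: algebra_simps)
  have B2: "FF (1 / \<theta>\<^sup>2) - FF ((real N - 1) * hN \<theta> N) \<le> hN \<theta> N * phi (1 / \<theta>\<^sup>2)"
  proof -
    have e': "1 / \<theta>\<^sup>2 - (real N - 1) * hN \<theta> N = hN \<theta> N" using e Nh by simp
    show ?thesis using B unfolding Nh e' .
  qed
  then have B': "FF (1 / \<theta>\<^sup>2) - FF ((real N - 1) * hN \<theta> N) \<le> 1 / (real N * (\<theta>\<^sup>2 - 1))"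
    using hphi_bound by linarith
  have A': "FF ((real N - 1) * hN \<theta> N) - FF (hN \<theta> N) \<le> (\<Sum>i=3..N. hN \<theta> N * phi ((real i - 1) * hN \<theta> N))"
    using A by simp
  have C': "FF (hN \<theta> N) \<le> 2" using C by simp
  have "DD \<theta> \<le> FF (1 / \<theta>\<^sup>2)" by (simp add: DD_def)
  then show ?thesis using A' B' C' by linarith
qed

lemma VV_upper: "dl \<theta> N < 1 \<Longrightarrow> VV \<theta> N \<le> DD \<theta> / (1 - dl \<theta> N)\<^sup>2"
proof -
  assume d: "dl \<theta> N < 1"
  have "VV \<theta> N \<le> (\<Sum>i=3..N. hN \<theta> N * phi ((real i - 1) * hN \<theta> N) / (1 - dl \<theta> N)\<^sup>2)"
    unfolding VV_def using d by (intro sum_mono term_upper) auto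
  also have "\<dots> = (\<Sum>i=3..N. hN \<theta> N * phi ((real i - 1) * hN \<theta> N)) / (1 - dl \<theta> N)\<^sup>2"
    by (simp add: sum_divide_distrib)
  also have "\<dots> \<le> DD \<theta> / (1 - dl \<theta> N)\<^sup>2"
    using sumT_upper by (intro divide_right_mono) auto
  finally show ?thesis .
qed

lemma VV_lower: "(DD \<theta> - 2 - 1 / (real N * (\<theta>\<^sup>2 - 1))) / (1 + dl \<theta> N)\<^sup>2 - 2 * dl \<theta> N \<le> VV \<theta> N"
proof -
  have "(DD \<theta> - 2 - 1 / (real N * (\<theta>\<^sup>2 - 1))) / (1 + dl \<theta> N)\<^sup>2 - 2 * dl \<theta> N
     \<le> (\<Sum>i=3..N. hN \<theta> N * phi ((real i - 1) * hN \<theta> N)) / (1 + dl \<theta> N)\<^sup>2 - (\<Sum>i=3..N. 4 * hN \<theta> N * ff \<theta> N i * EE \<theta> N i)"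
    using sumT_lower EE_sum by (intro diff_mono divide_right_mono) auto
  also have "\<dots> = (\<Sum>i=3..N. hN \<theta> N * phi ((real i - 1) * hN \<theta> N) / (1 + dl \<theta> N)\<^sup>2 - 4 * hN \<theta> N * ff \<theta> N i * EE \<theta> N i)"
    by (simp add: sum_divide_distrib sum_subtractf)
  also have "\<dots> \<le> VV \<theta> N"
    unfolding VV_def by (intro sum_mono term_lower) auto
  finally show ?thesis .
qed

lemma dl_bound: "dl \<theta> N \<le> \<theta> / (real N * (\<theta>\<^sup>2 - 1) * sqrt (\<theta>\<^sup>2 - 1))"
proof -
  have t2: "\<theta>\<^sup>2 > 1" using th by (simp add: one_less_power)
  define u where "u = sqrt (\<theta>\<^sup>2 - 1) / \<theta>"
  have u: "u > 0" using t2 th by (simp add: u_def)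
  have "u\<^sup>2 = 1 - real N * hN \<theta> N" using th t2 by (simp add: u_def Nh power_divide field_simps)
  also have "\<dots> \<le> 1 - (real N - 1) * hN \<theta> N" using hpos by (simp add: algebra_simps)
  also have "\<dots> = (ss \<theta> N N)\<^sup>2" using ss_sq[of N] by simp
  finally have "u \<le> ss \<theta> N N" using ssN_pos u by (simp add: power2_le_iff_abs_le abs_of_pos)
  then have "u^3 \<le> (ss \<theta> N N)^3" using u by (intro power_mono) auto
  then have "dl \<theta> N \<le> hN \<theta> N / u^3" unfolding dl_def using hpos u ssN_pos by (intro divide_left_mono) auto
  also have "\<dots> = \<theta> / (real N * (\<theta>\<^sup>2 - 1) * sqrt (\<theta>\<^sup>2 - 1))"
  proof -
    define q where "q = sqrt (\<theta>\<^sup>2 - 1)"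
    have q: "q > 0" "q * q = \<theta>\<^sup>2 - 1" using t2 by (auto simp: q_def)
    have "u^3 = q * q * q / \<theta>^3"
      by (simp add: u_def q_def[symmetric] power_divide power3_eq_cube)
    then have u3: "u^3 = (\<theta>\<^sup>2 - 1) * q / \<theta>^3" using q by simp
    have Np: "real N > 0" using N3 by simp
    have tp: "\<theta> > 0" "\<theta>\<^sup>2 - 1 > 0" using th t2 by auto
    have "hN \<theta> N / u^3 = \<theta> / (real N * (\<theta>\<^sup>2 - 1) * q)"
      unfolding u3 hN_def using Np tp q by (simp add: field_simps power2_eq_square power3_eq_cube)
    then show ?thesis by (simp add: q_def)
  qed
  finally show ?thesis .
qed

lemma coef_small: assumes i: "3 \<le> i" "i \<le> N" and d: "dl \<theta> N \<le> 1/2"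
  shows "(pp \<theta> N i)\<^sup>2 * (HH \<theta> N i N)\<^sup>2 \<le> 4 * dl \<theta> N" "(qq \<theta> N i)\<^sup>2 * (HH \<theta> N i N)\<^sup>2 \<le> 4 * dl \<theta> N"
proof -
  define c where "c = ss \<theta> N N"
  have c: "c > 0" "c \<le> 1" using ssN_pos ssN_le1 by (auto simp: c_def)
  have H: "0 \<le> HH \<theta> N i N" "HH \<theta> N i N \<le> ff \<theta> N i / (1 - dl \<theta> N)"
    using i d by (auto intro!: HH_nonneg HH_upper)
  have "ff \<theta> N i / (1 - dl \<theta> N) \<le> (1 / c) / (1/2)"
    using ff_le[of i] i d ff_ge1[of i] c by (intro frac_le) (auto simp: c_def)
  then have "HH \<theta> N i N \<le> 2 / c" using H by simp
  then have H2: "(HH \<theta> N i N)\<^sup>2 \<le> (2 / c)\<^sup>2" using H by (intro power_mono) auto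
  have key: "hN \<theta> N * (2 / c)\<^sup>2 \<le> 4 * dl \<theta> N"
  proof -
    have "c^3 \<le> c\<^sup>2" using c by (simp add: power3_eq_cube power2_eq_square mult_le_cancel_left1 mult_le_one)
    then have "hN \<theta> N / c\<^sup>2 \<le> hN \<theta> N / c^3" using hpos c by (intro divide_left_mono) auto
    then have "4 * (hN \<theta> N / c\<^sup>2) \<le> 4 * (hN \<theta> N / c^3)" by simp
    moreover have "hN \<theta> N * (2 / c)\<^sup>2 = 4 * (hN \<theta> N / c\<^sup>2)" by (simp add: power_divide)
    ultimately show ?thesis by (simp add: dl_def c_def[symmetric])
  qed
  show "(pp \<theta> N i)\<^sup>2 * (HH \<theta> N i N)\<^sup>2 \<le> 4 * dl \<theta> N"
    using mult_mono[OF pp_le[OF i] H2] hpos key by simp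
  show "(qq \<theta> N i)\<^sup>2 * (HH \<theta> N i N)\<^sup>2 \<le> 4 * dl \<theta> N"
    using mult_mono[OF qq_le[OF i] H2] hpos key by simp
qed

end

lemma (in prob_space) scaled_moments:
  fixes Y :: "'a \<Rightarrow> real"
  assumes Ym: "Y \<in> borel_measurable M"
    and h1: "has_bochner_integral M Y 0"
    and h2: "has_bochner_integral M (\<lambda>\<omega>. (Y \<omega>)^2) \<alpha>"
    and h4: "has_bochner_integral M (\<lambda>\<omega>. (Y \<omega>)^4) m4"
    and m4: "m4 \<le> K4"
  shows "integrable M (\<lambda>\<omega>. \<kappa> * Y \<omega>)" "integrable M (\<lambda>\<omega>. (\<kappa> * Y \<omega>)^2)"
    "integrable M (\<lambda>\<omega>. \<bar>\<kappa> * Y \<omega>\<bar>^3)"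
    "expectation (\<lambda>\<omega>. \<kappa> * Y \<omega>) = 0"
    "expectation (\<lambda>\<omega>. (\<kappa> * Y \<omega>)^2) = \<kappa>^2 * \<alpha>"
    "expectation (\<lambda>\<omega>. \<bar>\<kappa> * Y \<omega>\<bar>^3) \<le> \<bar>\<kappa>\<bar>^3 * (\<alpha> + K4)"
proof -
  have i1: "integrable M Y" and e1: "expectation Y = 0" using h1 by (auto simp: has_bochner_integral_iff)
  have i2: "integrable M (\<lambda>\<omega>. (Y \<omega>)^2)" and e2: "expectation (\<lambda>\<omega>. (Y \<omega>)^2) = \<alpha>"
    using h2 by (auto simp: has_bochner_integral_iff)
  have i4: "integrable M (\<lambda>\<omega>. (Y \<omega>)^4)" and e4: "expectation (\<lambda>\<omega>. (Y \<omega>)^4) = m4"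
    using h4 by (auto simp: has_bochner_integral_iff)
  have b3: "\<bar>y\<bar>^3 \<le> y^2 + y^4" for y :: real
  proof (cases "\<bar>y\<bar> \<le> 1")
    case True
    then have "\<bar>y\<bar>^3 \<le> \<bar>y\<bar>^2" using power_decreasing[of 2 3 "\<bar>y\<bar>"] by simp
    moreover have "0 \<le> y^4" by (simp add: zero_le_even_power)
    moreover have "\<bar>y\<bar>^2 = y^2" by simp
    ultimately show ?thesis by linarith
  next
    case False
    then have "\<bar>y\<bar>^3 \<le> \<bar>y\<bar>^4" by (intro power_increasing) auto
    moreover have "0 \<le> y^2" by simp
    moreover have "\<bar>y\<bar>^4 = y^4" by (simp add: power_abs[symmetric] zero_le_even_power)
    ultimately show ?thesis by linarith
  qed
  have i3: "integrable M (\<lambda>\<omega>. \<bar>Y \<omega>\<bar>^3)"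
    by (rule Bochner_Integration.integrable_bound[OF Bochner_Integration.integrable_add[OF i2 i4]])
       (use Ym b3 in \<open>auto intro!: AE_I2\<close>)
  have e3: "expectation (\<lambda>\<omega>. \<bar>Y \<omega>\<bar>^3) \<le> \<alpha> + K4"
  proof -
    have "expectation (\<lambda>\<omega>. \<bar>Y \<omega>\<bar>^3) \<le> expectation (\<lambda>\<omega>. (Y \<omega>)^2 + (Y \<omega>)^4)"
      by (intro integral_mono i3 Bochner_Integration.integrable_add i2 i4 b3)
    also have "\<dots> = \<alpha> + m4" using i2 i4 e2 e4 by simp
    finally show ?thesis using m4 by simp
  qed
  show "integrable M (\<lambda>\<omega>. \<kappa> * Y \<omega>)" using i1 by simp
  show "integrable M (\<lambda>\<omega>. (\<kappa> * Y \<omega>)^2)" using i2 by (simp add: power_mult_distrib)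
  show "integrable M (\<lambda>\<omega>. \<bar>\<kappa> * Y \<omega>\<bar>^3)" using i3 by (simp add: abs_mult power_mult_distrib)
  show "expectation (\<lambda>\<omega>. \<kappa> * Y \<omega>) = 0" using e1 by simp
  show "expectation (\<lambda>\<omega>. (\<kappa> * Y \<omega>)^2) = \<kappa>^2 * \<alpha>" using e2 by (simp add: power_mult_distrib)
  show "expectation (\<lambda>\<omega>. \<bar>\<kappa> * Y \<omega>\<bar>^3) \<le> \<bar>\<kappa>\<bar>^3 * (\<alpha> + K4)"
    using e3 by (simp add: abs_mult power_mult_distrib mult_left_mono)
qed


lemma LL_expand:
  "LL \<theta> N a b n \<omega> = (\<Sum>i=3..n. xi \<theta> N a b i \<omega> * (\<Prod>k=Suc i..n. gam \<theta> N k))"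
proof (induction n)
  case 0 then show ?case by simp
next
  case (Suc n)
  show ?case
  proof (cases "Suc n \<le> 2")
    case True then show ?thesis by simp
  next
    case False
    then have n2: "3 \<le> Suc n" by simp
    have "(\<Sum>i=3..Suc n. xi \<theta> N a b i \<omega> * (\<Prod>k=Suc i..Suc n. gam \<theta> N k))
      = (\<Sum>i=3..n. xi \<theta> N a b i \<omega> * (\<Prod>k=Suc i..Suc n. gam \<theta> N k)) + xi \<theta> N a b (Suc n) \<omega>"
      using n2 by (subst sum.cl_ivl_Suc) auto
    also have "(\<Sum>i=3..n. xi \<theta> N a b i \<omega> * (\<Prod>k=Suc i..Suc n. gam \<theta> N k))
      = (\<Sum>i=3..n. gam \<theta> N (Suc n) * (xi \<theta> N a b i \<omega> * (\<Prod>k=Suc i..n. gam \<theta> N k)))"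
      by (intro sum.cong refl) (subst prod.cl_ivl_Suc, auto)
    finally show ?thesis using False Suc.IH by (simp add: sum_distrib_left)
  qed
qed

lemma LL_sum:
  "(\<Sum>n=3..m. LL \<theta> N a b n \<omega>) = (\<Sum>i=3..m. HH \<theta> N i m * xi \<theta> N a b i \<omega>)"
proof (induction m)
  case 0 then show ?case by simp
next
  case (Suc m)
  show ?case
  proof (cases "Suc m \<le> 2")
    case True then show ?thesis by simp
  next
    case False
    then have n2: "3 \<le> Suc m" by simp
    have H: "HH \<theta> N i (Suc m) = HH \<theta> N i m + (\<Prod>k=Suc i..Suc m. gam \<theta> N k)" if "i \<le> m" for i
      unfolding HH_def using that by (subst sum.cl_ivl_Suc) auto
    have "(\<Sum>i=3..Suc m. HH \<theta> N i (Suc m) * xi \<theta> N a b i \<omega>)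
      = (\<Sum>i=3..m. HH \<theta> N i (Suc m) * xi \<theta> N a b i \<omega>) + HH \<theta> N (Suc m) (Suc m) * xi \<theta> N a b (Suc m) \<omega>"
      using n2 by (subst sum.cl_ivl_Suc) auto
    also have "(\<Sum>i=3..m. HH \<theta> N i (Suc m) * xi \<theta> N a b i \<omega>)
      = (\<Sum>i=3..m. HH \<theta> N i m * xi \<theta> N a b i \<omega>) + (\<Sum>i=3..m. xi \<theta> N a b i \<omega> * (\<Prod>k=Suc i..Suc m. gam \<theta> N k))"
      by (simp add: H sum.distrib algebra_simps)
    finally have "(\<Sum>i=3..Suc m. HH \<theta> N i (Suc m) * xi \<theta> N a b i \<omega>)
       = (\<Sum>n=3..m. LL \<theta> N a b n \<omega>) + ((\<Sum>i=3..m. xi \<theta> N a b i \<omega> * (\<Prod>k=Suc i..Suc m. gam \<theta> N k)) + xi \<theta> N a b (Suc m) \<omega>)"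
      using Suc.IH by (simp add: HH_self)
    also have "(\<Sum>i=3..m. xi \<theta> N a b i \<omega> * (\<Prod>k=Suc i..Suc m. gam \<theta> N k)) + xi \<theta> N a b (Suc m) \<omega> = LL \<theta> N a b (Suc m) \<omega>"
      unfolding LL_expand[of \<theta> N a b "Suc m"] using n2 by (simp only: sum.cl_ivl_Suc) simp
    finally show ?thesis using n2 by (subst sum.cl_ivl_Suc) auto
  qed
qed

lemma xi_eq: "xi \<theta> N a b i \<omega> = pp \<theta> N i * a i \<omega> + qq \<theta> N i * cc b (i - 1) \<omega>"
  by (simp add: xi_def pp_def qq_def)


definition coef :: "real \<Rightarrow> nat \<Rightarrow> nat + nat \<Rightarrow> real" where
  "coef \<theta> N k = (case k of Inl i \<Rightarrow> pp \<theta> N i * HH \<theta> N i N | Inr j \<Rightarrow> qq \<theta> N (Suc j) * HH \<theta> N (Suc j) N)"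

definition gfun :: "real \<Rightarrow> nat \<Rightarrow> real \<Rightarrow> nat + nat \<Rightarrow> real \<Rightarrow> real" where
  "gfun \<theta> N c k = (case k of Inl i \<Rightarrow> (\<lambda>x. coef \<theta> N k / c * x)
      | Inr j \<Rightarrow> (\<lambda>x. coef \<theta> N k / c * ((x\<^sup>2 - real j) / sqrt (real j))))"

definition JJ :: "nat \<Rightarrow> (nat + nat) set" where
  "JJ N = Inl ` {3..N} \<union> Inr ` {2..N-1}"

lemma JJ_sum: "(\<Sum>k\<in>JJ N. f k) = (\<Sum>i=3..N. f (Inl i)) + (\<Sum>j=2..N-1. f (Inr j))"
proof -
  have "(\<Sum>k\<in>JJ N. f k) = (\<Sum>k\<in>Inl ` {3..N}. f k) + (\<Sum>k\<in>Inr ` {2..N-1}. f k)"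
    unfolding JJ_def by (intro sum.union_disjoint) auto
  also have "\<dots> = (\<Sum>i=3..N. f (Inl i)) + (\<Sum>j=2..N-1. f (Inr j))"
    by (simp add: sum.reindex)
  finally show ?thesis .
qed

lemma shift_sum: "3 \<le> (N::nat) \<Longrightarrow> (\<Sum>j=2..N-1. f j) = (\<Sum>i=3..N. f (i - 1))"
proof -
  assume N: "3 \<le> N"
  have "(\<Sum>i=3..N. f (i - 1)) = (\<Sum>i=2+1..(N-1)+1. f (i - 1))" using N by simp
  also have "\<dots> = (\<Sum>i=2..N-1. f (i + 1 - 1))" by (rule sum.shift_bounds_cl_nat_ivl)
  finally show ?thesis by simp
qed

lemma coef_sq_sum: assumes "3 \<le> N"
  shows "(\<Sum>k\<in>JJ N. (coef \<theta> N k)\<^sup>2) = VV \<theta> N"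
proof -
  have "(\<Sum>k\<in>JJ N. (coef \<theta> N k)\<^sup>2) = (\<Sum>i=3..N. (pp \<theta> N i * HH \<theta> N i N)\<^sup>2) + (\<Sum>j=2..N-1. (qq \<theta> N (Suc j) * HH \<theta> N (Suc j) N)\<^sup>2)"
    by (simp add: JJ_sum coef_def)
  also have "(\<Sum>j=2..N-1. (qq \<theta> N (Suc j) * HH \<theta> N (Suc j) N)\<^sup>2) = (\<Sum>i=3..N. (qq \<theta> N (Suc (i - 1)) * HH \<theta> N (Suc (i - 1)) N)\<^sup>2)"
    using assms by (rule shift_sum)
  also have "\<dots> = (\<Sum>i=3..N. (qq \<theta> N i * HH \<theta> N i N)\<^sup>2)"
    by (intro sum.cong refl) (auto simp: Suc_diff_1)
  finally show ?thesis by (simp add: VV_def sum.distrib[symmetric] power_mult_distrib algebra_simps)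
qed

lemma Z_sum: assumes "3 \<le> N"
  shows "(\<Sum>k\<in>JJ N. gfun \<theta> N c k (case_sum a b k \<omega>)) = (\<Sum>i=3..N. LL \<theta> N a b i \<omega>) / c"
proof -
  have "(\<Sum>k\<in>JJ N. gfun \<theta> N c k (case_sum a b k \<omega>))
     = (\<Sum>i=3..N. coef \<theta> N (Inl i) / c * a i \<omega>) + (\<Sum>j=2..N-1. coef \<theta> N (Inr j) / c * cc b j \<omega>)"
    by (simp add: JJ_sum gfun_def cc_def)
  also have "(\<Sum>j=2..N-1. coef \<theta> N (Inr j) / c * cc b j \<omega>) = (\<Sum>i=3..N. coef \<theta> N (Inr (i - 1)) / c * cc b (i - 1) \<omega>)"
    using assms by (rule shift_sum)
  also have "(\<Sum>i=3..N. coef \<theta> N (Inl i) / c * a i \<omega>) + (\<Sum>i=3..N. coef \<theta> N (Inr (i - 1)) / c * cc b (i - 1) \<omega>)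
     = (\<Sum>i=3..N. HH \<theta> N i N * xi \<theta> N a b i \<omega>) / c"
  proof -
    have "(\<Sum>i=3..N. coef \<theta> N (Inl i) / c * a i \<omega>) + (\<Sum>i=3..N. coef \<theta> N (Inr (i - 1)) / c * cc b (i - 1) \<omega>)
      = (\<Sum>i=3..N. coef \<theta> N (Inl i) / c * a i \<omega> + coef \<theta> N (Inr (i - 1)) / c * cc b (i - 1) \<omega>)"
      by (simp add: sum.distrib)
    also have "\<dots> = (\<Sum>i=3..N. HH \<theta> N i N * xi \<theta> N a b i \<omega> / c)"
    proof (intro sum.cong refl)
      fix i assume i: "i \<in> {3..N}"
      then have e: "Suc (i - 1) = i" "Suc (i - Suc 0) = i" by auto
      show "coef \<theta> N (Inl i) / c * a i \<omega> + coef \<theta> N (Inr (i - 1)) / c * cc b (i - 1) \<omega> = HH \<theta> N i N * xi \<theta> N a b i \<omega> / c"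
        unfolding coef_def xi_eq by (simp add: e add_divide_distrib algebra_simps)
    qed
    finally show ?thesis by (simp add: sum_divide_distrib)
  qed
  also have "\<dots> = (\<Sum>i=3..N. LL \<theta> N a b i \<omega>) / c" by (simp add: LL_sum)
  finally show ?thesis .
qed


lemma term_bound_aux:
  fixes x m A B :: real
  assumes "\<bar>x\<bar> \<le> m" "0 \<le> A" "0 \<le> B"
  shows "A * \<bar>x\<bar>^3 + B * (x\<^sup>2)\<^sup>2 \<le> (A * m + B * m\<^sup>2) * x\<^sup>2"
proof -
  have x3: "\<bar>x\<bar>^3 = \<bar>x\<bar> * x\<^sup>2" by (simp add: power3_eq_cube power2_eq_square abs_mult_self_eq)
  have "\<bar>x\<bar> * x\<^sup>2 \<le> m * x\<^sup>2" using assms(1) by (rule mult_right_mono) simp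
  then have a: "A * \<bar>x\<bar>^3 \<le> A * (m * x\<^sup>2)" unfolding x3 using assms(2) by (rule mult_left_mono)
  have "x\<^sup>2 \<le> m\<^sup>2" using assms(1) by (metis abs_ge_zero power2_abs power_mono)
  then have "x\<^sup>2 * x\<^sup>2 \<le> m\<^sup>2 * x\<^sup>2" by (rule mult_right_mono) simp
  then have b: "B * (x\<^sup>2)\<^sup>2 \<le> B * (m\<^sup>2 * x\<^sup>2)" using assms(3) by (simp add: power2_eq_square[of "x\<^sup>2"] mult_left_mono)
  show ?thesis using a b by (simp add: algebra_simps)
qed

lemma (in prob_space) char_N:
  fixes a b :: "nat \<Rightarrow> 'a \<Rightarrow> real"
  assumes al: "\<alpha> > 0"
    and ind: "indep_vars (\<lambda>_. borel) (case_sum a b) (Inl ` {1..} \<union> Inr ` {1..})"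
    and an: "\<And>i. i \<ge> 1 \<Longrightarrow> distributed M lborel (a i) (\<lambda>x. ennreal (normal_density 0 (sqrt \<alpha>) x))"
    and bm: "\<And>i. i \<ge> 1 \<Longrightarrow> b i \<in> borel_measurable M"
    and bd: "\<And>i. i \<ge> 1 \<Longrightarrow> distr M borel (\<lambda>\<omega>. (b i \<omega>)\<^sup>2)
            = distr (chi2_distribution (2 * real i / \<alpha>)) borel (\<lambda>x. \<alpha> / 2 * x)"
    and det: "detc \<theta> N" and dlh: "dl \<theta> N \<le> 1/2" and c: "c > 0"
  shows "cmod (char (distr M borel (\<lambda>\<omega>. (\<Sum>i=3..N. LL \<theta> N a b i \<omega>) / c)) t
            - exp (- (t^2) * (\<alpha> * VV \<theta> N / c\<^sup>2) / 2))
     \<le> (\<bar>t\<bar>^3 * (\<alpha> + (3 * \<alpha>^2 + 6 * \<alpha>^3)) / 6 * (sqrt (4 * dl \<theta> N) / c)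
        + t^4 * \<alpha>^2 / 8 * (sqrt (4 * dl \<theta> N) / c)^2) * (VV \<theta> N / c\<^sup>2)"
proof -
  interpret detc \<theta> N by (rule det)
  define K4 where "K4 = 3 * \<alpha>^2 + 6 * \<alpha>^3"
  define m where "m = sqrt (4 * dl \<theta> N) / c"
  define \<kappa> where "\<kappa> k = coef \<theta> N k / c" for k
  define Z where "Z k \<omega> = gfun \<theta> N c k (case_sum a b k \<omega>)" for k \<omega>
  have N3': "3 \<le> N" by (rule N3)
  have Jfin: "finite (JJ N)" by (simp add: JJ_def)
  have Jsub: "JJ N \<subseteq> Inl ` {1..} \<union> Inr ` {1..}" by (auto simp: JJ_def)
  have Zl: "Z (Inl i) \<omega> = \<kappa> (Inl i) * a i \<omega>" for i \<omega> by (simp add: Z_def gfun_def \<kappa>_def)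
  have Zr: "Z (Inr j) \<omega> = \<kappa> (Inr j) * cc b j \<omega>" for j \<omega> by (simp add: Z_def gfun_def \<kappa>_def cc_def)
  have ind2: "indep_vars (\<lambda>_. borel) Z (JJ N)"
    unfolding Z_def[abs_def]
    by (rule indep_vars_compose2[OF indep_vars_subset[OF ind Jsub]])
       (auto simp: gfun_def split: sum.splits)
  have K4: "3 * \<alpha>^2 \<le> K4" "3 * \<alpha>^2 + 6 * \<alpha>^3 / real j \<le> K4" if "j \<ge> 1" for j
  proof -
    show "3 * \<alpha>^2 \<le> K4" using al by (simp add: K4_def)
    have "6 * \<alpha>^3 / real j \<le> 6 * \<alpha>^3" using that al by (simp add: divide_le_eq mult_le_cancel_left1)
    then show "3 * \<alpha>^2 + 6 * \<alpha>^3 / real j \<le> K4" by (simp add: K4_def)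
  qed
  have mom: "integrable M (Z k) \<and> integrable M (\<lambda>\<omega>. (Z k \<omega>)^2) \<and> integrable M (\<lambda>\<omega>. \<bar>Z k \<omega>\<bar>^3)
     \<and> expectation (Z k) = 0 \<and> expectation (\<lambda>\<omega>. (Z k \<omega>)^2) = (\<kappa> k)^2 * \<alpha>
     \<and> expectation (\<lambda>\<omega>. \<bar>Z k \<omega>\<bar>^3) \<le> \<bar>\<kappa> k\<bar>^3 * (\<alpha> + K4)" if k: "k \<in> JJ N" for k
  proof (cases k)
    case (Inl i)
    then have i: "i \<ge> 1" using k by (auto simp: JJ_def)
    have A: "a i \<in> borel_measurable M" using an[OF i] by (auto dest: distributed_measurable)
    note nm = normal_moments[OF an[OF i] al]
    note sm = scaled_moments[OF A nm(1) nm(2) nm(3) K4(1)[OF i], of "\<kappa> k"]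
    show ?thesis using sm unfolding Inl Zl[abs_def] by (simp add: Inl)
  next
    case (Inr j)
    then have j: "j \<ge> 1" using k by (auto simp: JJ_def)
    have C: "cc b j \<in> borel_measurable M" using bm[OF j] unfolding cc_def[abs_def] by measurable
    note cm = cc_moments[where b=b and j=j, OF al j bm[OF j] bd[OF j]]
    note sm = scaled_moments[OF C cm(1) cm(2) cm(3) K4(2)[OF j], of "\<kappa> k"]
    show ?thesis using sm unfolding Inr Zr[abs_def] by (simp add: Inr)
  qed
  have Zm: "Z k \<in> borel_measurable M" if "k \<in> JJ N" for k
    using mom[OF that] by (auto dest: borel_measurable_integrable)
  have main: "cmod (char (distr M borel (\<lambda>\<omega>. \<Sum>k\<in>JJ N. Z k \<omega>)) t - exp (- (t^2) * (\<Sum>k\<in>JJ N. (\<kappa> k)^2 * \<alpha>) / 2))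
     \<le> (\<Sum>k\<in>JJ N. \<bar>t\<bar>^3 * (\<bar>\<kappa> k\<bar>^3 * (\<alpha> + K4)) / 6 + t^4 * ((\<kappa> k)^2 * \<alpha>)^2 / 8)"
    by (rule char_sum_bound[OF Jfin ind2 Zm]) (use mom in auto)
  have ZS: "(\<lambda>\<omega>. \<Sum>k\<in>JJ N. Z k \<omega>) = (\<lambda>\<omega>. (\<Sum>i=3..N. LL \<theta> N a b i \<omega>) / c)"
    unfolding Z_def by (rule ext) (rule Z_sum[OF N3'])
  have KS: "(\<Sum>k\<in>JJ N. (\<kappa> k)^2) = VV \<theta> N / c\<^sup>2"
    using coef_sq_sum[OF N3', of \<theta>] by (simp add: \<kappa>_def power_divide sum_divide_distrib[symmetric])
  have KS2: "(\<Sum>k\<in>JJ N. (\<kappa> k)^2 * \<alpha>) = \<alpha> * VV \<theta> N / c\<^sup>2"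
  proof -
    have "(\<Sum>k\<in>JJ N. (\<kappa> k)^2 * \<alpha>) = (\<Sum>k\<in>JJ N. (\<kappa> k)^2) * \<alpha>" by (rule sum_distrib_right[symmetric])
    then show ?thesis using KS by simp
  qed
  have km: "\<bar>\<kappa> k\<bar> \<le> m" if "k \<in> JJ N" for k
  proof -
    have "(coef \<theta> N k)\<^sup>2 \<le> 4 * dl \<theta> N"
      using that coef_small[OF _ _ dlh] by (auto simp: JJ_def coef_def power_mult_distrib)
    then have "\<bar>coef \<theta> N k\<bar> \<le> sqrt (4 * dl \<theta> N)" by (simp add: real_le_rsqrt)
    then show ?thesis using c by (simp add: \<kappa>_def m_def abs_div divide_right_mono)
  qed
  have "(\<Sum>k\<in>JJ N. \<bar>t\<bar>^3 * (\<bar>\<kappa> k\<bar>^3 * (\<alpha> + K4)) / 6 + t^4 * ((\<kappa> k)^2 * \<alpha>)^2 / 8)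
     \<le> (\<Sum>k\<in>JJ N. (\<bar>t\<bar>^3 * (\<alpha> + K4) / 6 * m + t^4 * \<alpha>^2 / 8 * m^2) * (\<kappa> k)^2)"
  proof (intro sum_mono)
    fix k assume k: "k \<in> JJ N"
    have K0: "0 \<le> \<alpha> + K4" using al by (simp add: K4_def)
    have "(\<bar>t\<bar>^3 * (\<alpha> + K4) / 6) * \<bar>\<kappa> k\<bar>^3 + (t^4 * \<alpha>^2 / 8) * ((\<kappa> k)\<^sup>2)\<^sup>2
       \<le> ((\<bar>t\<bar>^3 * (\<alpha> + K4) / 6) * m + (t^4 * \<alpha>^2 / 8) * m\<^sup>2) * (\<kappa> k)\<^sup>2"
      using km[OF k] K0 by (intro term_bound_aux) (auto simp: zero_le_even_power)
    moreover have "\<bar>t\<bar>^3 * (\<bar>\<kappa> k\<bar>^3 * (\<alpha> + K4)) / 6 + t^4 * ((\<kappa> k)^2 * \<alpha>)^2 / 8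
       = (\<bar>t\<bar>^3 * (\<alpha> + K4) / 6) * \<bar>\<kappa> k\<bar>^3 + (t^4 * \<alpha>^2 / 8) * ((\<kappa> k)\<^sup>2)\<^sup>2"
      by (simp add: power_mult_distrib mult_ac)
    ultimately show "\<bar>t\<bar>^3 * (\<bar>\<kappa> k\<bar>^3 * (\<alpha> + K4)) / 6 + t^4 * ((\<kappa> k)^2 * \<alpha>)^2 / 8
      \<le> (\<bar>t\<bar>^3 * (\<alpha> + K4) / 6 * m + t^4 * \<alpha>^2 / 8 * m^2) * (\<kappa> k)^2"
      by simp
  qed
  also have "\<dots> = (\<bar>t\<bar>^3 * (\<alpha> + K4) / 6 * m + t^4 * \<alpha>^2 / 8 * m^2) * (VV \<theta> N / c\<^sup>2)"
    by (simp add: sum_distrib_left[symmetric] KS)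
  finally show ?thesis using main unfolding ZS KS2 by (simp add: K4_def m_def)
qed


lemma w_top:
  fixes w :: "nat \<Rightarrow> real"
  assumes wp: "\<And>N. w N > 0" and lim: "((\<lambda>N. (ln (ln (real N)))\<^sup>2 / w N) \<longlongrightarrow> 0) sequentially"
  shows "filterlim w at_top sequentially"
proof (subst filterlim_at_top, intro allI)
  fix Z :: real
  define Z' where "Z' = max Z 1"
  have Z': "Z' > 0" "Z \<le> Z'" by (auto simp: Z'_def)
  have "filterlim (\<lambda>N::nat. (ln (ln (real N)))\<^sup>2) at_top sequentially" by real_asymp
  then have e1: "eventually (\<lambda>N. (ln (ln (real N)))\<^sup>2 \<ge> 1) sequentially"
    by (simp add: filterlim_at_top)
  have e2: "eventually (\<lambda>N. (ln (ln (real N)))\<^sup>2 / w N < 1 / Z') sequentially"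
    using order_tendstoD(2)[OF lim] Z' by simp
  show "eventually (\<lambda>N. Z \<le> w N) sequentially"
    using e1 e2
  proof eventually_elim
    case (elim N)
    then have "(ln (ln (real N)))\<^sup>2 * Z' < w N" using wp[of N] Z' by (simp add: field_simps)
    moreover have "Z' \<le> (ln (ln (real N)))\<^sup>2 * Z'" using elim Z' by (simp add: mult_le_cancel_right1)
    ultimately show ?case using Z' by linarith
  qed
qed

lemma x_to_0:
  fixes w :: "nat \<Rightarrow> real"
  assumes lim: "((\<lambda>N. w N / (ln (real N))\<^sup>2) \<longlongrightarrow> 0) sequentially"
  shows "((\<lambda>N. real N powr (-2/3) * w N) \<longlongrightarrow> 0) sequentially"
proof -
  have l2: "((\<lambda>N::nat. (ln (real N))\<^sup>2 * real N powr (-2/3)) \<longlongrightarrow> 0) sequentially" by real_asymp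
  have "((\<lambda>N. (w N / (ln (real N))\<^sup>2) * ((ln (real N))\<^sup>2 * real N powr (-2/3))) \<longlongrightarrow> 0 * 0) sequentially"
    by (intro tendsto_mult lim l2)
  moreover have "eventually (\<lambda>N. (w N / (ln (real N))\<^sup>2) * ((ln (real N))\<^sup>2 * real N powr (-2/3)) = real N powr (-2/3) * w N) sequentially"
    using eventually_ge_at_top[of "2::nat"]
  proof eventually_elim
    case (elim N)
    then have "ln (real N) > 0" by simp
    then show ?case by (simp add: field_simps)
  qed
  ultimately show ?thesis by (simp add: tendsto_cong)
qed

lemma key_bounds:
  fixes w :: "nat \<Rightarrow> real" and N :: nat
  assumes wp: "w N > 0" and N: "N \<ge> 1"
  defines "\<theta> \<equiv> 1 + real N powr (-2/3) * w N"
  shows "\<theta> > 1" "1 / (real N * (\<theta>\<^sup>2 - 1)) \<le> 1 / (2 * w N)"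
    "\<theta> / (real N * (\<theta>\<^sup>2 - 1) * sqrt (\<theta>\<^sup>2 - 1)) \<le> \<theta> / (w N * sqrt (w N))"
proof -
  define x where "x = real N powr (-2/3) * w N"
  have Np: "real N > 0" using N by simp
  have xp: "x > 0" using wp Np by (simp add: x_def)
  have th_x: "\<theta> = 1 + x" by (simp add: \<theta>_def x_def)
  show th: "\<theta> > 1" using xp by (simp add: th_x)
  have beta: "\<theta>\<^sup>2 - 1 \<ge> 2 * x" using xp by (simp add: th_x power2_eq_square algebra_simps)
  have Nx: "real N * x = real N powr (1/3) * w N"
  proof -
    have "real N * real N powr (-2/3) = real N powr 1 * real N powr (-2/3)" using Np by simp
    also have "\<dots> = real N powr (1/3)" by (subst powr_add[symmetric]) simp
    finally have "real N * real N powr (-2/3) = real N powr (1/3)" .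
    then show ?thesis by (simp add: x_def mult.assoc[symmetric])
  qed
  have N13: "real N powr (1/3) \<ge> 1" using N by (simp add: ge_one_powr_ge_zero)
  have "2 * w N \<le> 2 * (real N * x)" unfolding Nx using N13 wp by (simp add: mult_le_cancel_right1)
  also have "\<dots> \<le> real N * (\<theta>\<^sup>2 - 1)" using beta Np by simp
  finally have A: "2 * w N \<le> real N * (\<theta>\<^sup>2 - 1)" .
  then show "1 / (real N * (\<theta>\<^sup>2 - 1)) \<le> 1 / (2 * w N)" using wp by (intro divide_left_mono) auto
  have sx: "sqrt x = real N powr (-1/3) * sqrt (w N)"
  proof -
    have "sqrt (real N powr (-2/3)) = real N powr (-1/3)"
      using Np by (simp add: powr_half_sqrt[symmetric] powr_powr)
    then show ?thesis by (simp add: x_def real_sqrt_mult)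
  qed
  have NxS: "real N * x * sqrt x = w N * sqrt (w N)"
  proof -
    have "real N powr (1/3) * real N powr (-1/3) = 1" using Np by (simp add: powr_add[symmetric])
    moreover have "real N * x * sqrt x = (real N powr (1/3) * real N powr (-1/3)) * (w N * sqrt (w N))"
      unfolding Nx sx by (simp add: mult_ac)
    ultimately show ?thesis by simp
  qed
  have "w N * sqrt (w N) \<le> real N * (\<theta>\<^sup>2 - 1) * sqrt (\<theta>\<^sup>2 - 1)"
  proof -
    have "real N * x \<le> real N * (\<theta>\<^sup>2 - 1)" using beta xp Np by simp
    moreover have "sqrt x \<le> sqrt (\<theta>\<^sup>2 - 1)" using beta xp by simp
    ultimately have "real N * x * sqrt x \<le> real N * (\<theta>\<^sup>2 - 1) * sqrt (\<theta>\<^sup>2 - 1)"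
      using xp Np by (intro mult_mono) auto
    then show ?thesis unfolding NxS .
  qed
  then show "\<theta> / (real N * (\<theta>\<^sup>2 - 1) * sqrt (\<theta>\<^sup>2 - 1)) \<le> \<theta> / (w N * sqrt (w N))"
  proof -
    have p: "0 < w N * sqrt (w N)" using wp by simp
    then have "0 < real N * (\<theta>\<^sup>2 - 1) * sqrt (\<theta>\<^sup>2 - 1)" using \<open>w N * sqrt (w N) \<le> _\<close> by linarith
    then show ?thesis using th p \<open>w N * sqrt (w N) \<le> _\<close> by (intro divide_left_mono) auto
  qed
qed


lemma (in prob_space) LL_meas:
  assumes am: "\<And>i. i \<ge> 1 \<Longrightarrow> a i \<in> borel_measurable M"
    and bm: "\<And>i. i \<ge> 1 \<Longrightarrow> b i \<in> borel_measurable M"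
  shows "LL \<theta> N a b n \<in> borel_measurable M"
proof (induction n)
  case 0 then show ?case by simp
next
  case (Suc n)
  show ?case
  proof (cases "Suc n \<le> 2")
    case True then show ?thesis by simp
  next
    case False
    then have n: "n \<ge> 1" "Suc n \<ge> 1" by auto
    note [measurable] = am[OF n(2)] bm[OF n(1)] Suc.IH
    have "xi \<theta> N a b (Suc n) \<in> borel_measurable M"
      unfolding xi_def[abs_def] cc_def[abs_def] by simp
    note [measurable] = this
    show ?thesis using False by simp
  qed
qed

theorem theorem5:
  fixes M :: "'a measure" and \<alpha> :: real
    and a b :: "nat \<Rightarrow> 'a \<Rightarrow> real" and w :: "nat \<Rightarrow> real"
  assumes "prob_space M"
    and "\<alpha> > 0"
    and "prob_space.indep_vars M (\<lambda>_. borel) (case_sum a b) (Inl ` {1..} \<union> Inr ` {1..})"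
    and "\<And>i. i \<ge> 1 \<Longrightarrow> distributed M lborel (a i) (\<lambda>x. ennreal (normal_density 0 (sqrt \<alpha>) x))"
    and "\<And>i. i \<ge> 1 \<Longrightarrow> b i \<in> borel_measurable M"
    and "\<And>i. i \<ge> 1 \<Longrightarrow> AE \<omega> in M. b i \<omega> \<ge> 0"
    and "\<And>i. i \<ge> 1 \<Longrightarrow> distr M borel (\<lambda>\<omega>. (b i \<omega>)\<^sup>2)
            = distr (chi2_distribution (2 * real i / \<alpha>)) borel (\<lambda>x. \<alpha> / 2 * x)"
    and "\<And>N. w N > 0"
    and "((\<lambda>N. (ln (ln (real N)))\<^sup>2 / w N) \<longlongrightarrow> 0) sequentially"
    and "((\<lambda>N. w N / (ln (real N))\<^sup>2) \<longlongrightarrow> 0) sequentially"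
  shows "weak_conv_m
     (\<lambda>N. distr M borel (\<lambda>\<omega>.
        (\<Sum>i=3..N. LL (thetaN w N) N a b i \<omega>) /
        sqrt (\<alpha> * ln ((thetaN w N + sqrt ((thetaN w N)\<^sup>2 - 1)) / (2 * sqrt ((thetaN w N)\<^sup>2 - 1))))))
     std_normal_distribution"
proof -
  note PS = assms(1)
  interpret prob_space M by (rule PS)
  have al: "\<alpha> > 0" by fact
  have ind: "indep_vars (\<lambda>_. borel) (case_sum a b) (Inl ` {1..} \<union> Inr ` {1..})" by fact
  have an: "\<And>i. i \<ge> 1 \<Longrightarrow> distributed M lborel (a i) (\<lambda>x. ennreal (normal_density 0 (sqrt \<alpha>) x))" by fact
  have bm: "\<And>i. i \<ge> 1 \<Longrightarrow> b i \<in> borel_measurable M" by fact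
  have bd: "\<And>i. i \<ge> 1 \<Longrightarrow> distr M borel (\<lambda>\<omega>. (b i \<omega>)\<^sup>2)
            = distr (chi2_distribution (2 * real i / \<alpha>)) borel (\<lambda>x. \<alpha> / 2 * x)" by fact
  have wp: "\<And>N. w N > 0" by fact
  have am: "\<And>i. i \<ge> 1 \<Longrightarrow> a i \<in> borel_measurable M"
  proof -
    fix i :: nat assume "i \<ge> 1"
    then show "a i \<in> borel_measurable M" using an[of i] by (auto dest: distributed_measurable)
  qed
  define th where "th N = thetaN w N" for N
  define c where "c N = sqrt (\<alpha> * ln ((th N + sqrt ((th N)\<^sup>2 - 1)) / (2 * sqrt ((th N)\<^sup>2 - 1))))" for N
  define X where "X N \<omega> = (\<Sum>i=3..N. LL (th N) N a b i \<omega>) / c N" for N \<omega>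
  define DDN where "DDN N = DD (th N)" for N
  define S where "S N = VV (th N) N / DDN N" for N
  define dlN where "dlN N = dl (th N) N" for N
  define eN where "eN N = 1 / (real N * ((th N)\<^sup>2 - 1))" for N

  have wtop: "filterlim w at_top sequentially" using w_top[OF wp assms(9)] .
  have x0: "((\<lambda>N. real N powr (-2/3) * w N) \<longlongrightarrow> 0) sequentially" using x_to_0[OF assms(10)] .
  have th1: "(th \<longlongrightarrow> 1) sequentially"
    using tendsto_add[OF tendsto_const[of 1] x0] by (simp add: th_def[abs_def] thetaN_def)
  have thg: "th N > 1" if "N \<ge> 1" for N
    using key_bounds(1)[OF wp that] by (simp add: th_def thetaN_def)
  have ev3: "eventually (\<lambda>N. N \<ge> 3) sequentially" by (rule eventually_ge_at_top)
  have detN: "detc (th N) N" if "N \<ge> 3" for N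
    using thg[of N] that by unfold_locales auto
  have cDD: "c N = sqrt (\<alpha> * DDN N)" if "N \<ge> 1" for N
    using DD_eq[OF thg[OF that]] by (simp add: c_def DDN_def)

  have DDtop: "filterlim DDN at_top sequentially"
  proof -
    define q where "q N = sqrt ((th N)\<^sup>2 - 1)" for N
    have q0: "(q \<longlongrightarrow> 0) sequentially"
    proof -
      have "((\<lambda>N. sqrt ((th N)\<^sup>2 - 1)) \<longlongrightarrow> sqrt (1\<^sup>2 - 1)) sequentially"
        by (intro tendsto_intros th1)
      then show ?thesis by (simp add: q_def[abs_def])
    qed
    have qpos: "eventually (\<lambda>N. 0 < 2 * q N) sequentially"
      using eventually_ge_at_top[of "1::nat"]
    proof eventually_elim
      case (elim N) then show ?case using thg[of N] by (simp add: q_def one_less_power)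
    qed
    have "filterlim (\<lambda>N. inverse (2 * q N)) at_top sequentially"
      using q0 qpos by (intro filterlim_inverse_at_top) (auto intro!: tendsto_eq_intros)
    then have "filterlim (\<lambda>N. ln (inverse (2 * q N))) at_top sequentially"
      by (rule filterlim_compose[OF ln_at_top])
    moreover have "eventually (\<lambda>N. ln (inverse (2 * q N)) \<le> DDN N) sequentially"
      using eventually_ge_at_top[of "1::nat"]
    proof eventually_elim
      case (elim N)
      have t: "th N > 1" using thg elim by simp
      have qp: "q N > 0" using t by (simp add: q_def one_less_power)
      have "inverse (2 * q N) \<le> (th N + q N) / (2 * q N)"
        using t qp by (simp add: inverse_eq_divide divide_right_mono)
      then have "ln (inverse (2 * q N)) \<le> ln ((th N + q N) / (2 * q N))"
      proof -
        have p1: "0 < (th N + q N) / (2 * q N)" using qp t by (intro divide_pos_pos) auto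
        have p2: "0 < inverse (2 * q N)" using qp by simp
        show ?thesis by (rule iffD2[OF ln_le_cancel_iff[OF p2 p1]]) fact
      qed
      then show ?case using DD_eq[OF t] by (simp add: DDN_def q_def)
    qed
    ultimately show ?thesis by (rule filterlim_at_top_mono)
  qed
  have DDpos: "eventually (\<lambda>N. DDN N > 0) sequentially"
    using DDtop by (simp add: filterlim_at_top_dense)
  have invDD: "((\<lambda>N. inverse (DDN N)) \<longlongrightarrow> 0) sequentially"
    by (rule tendsto_inverse_0_at_top[OF DDtop])

  have dl0: "(dlN \<longlongrightarrow> 0) sequentially"
  proof (rule tendsto_sandwich[where f="\<lambda>_. 0" and h="\<lambda>N. th N * inverse (w N * sqrt (w N))"])
    show "eventually (\<lambda>N. 0 \<le> dlN N) sequentially"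
      using ev3 by eventually_elim (use detN in \<open>auto simp: dlN_def intro: detc.dl_nonneg\<close>)
    show "eventually (\<lambda>N. dlN N \<le> th N * inverse (w N * sqrt (w N))) sequentially"
      using ev3
    proof eventually_elim
      case (elim N)
      have "dlN N \<le> th N / (real N * ((th N)\<^sup>2 - 1) * sqrt ((th N)\<^sup>2 - 1))"
        unfolding dlN_def by (rule detc.dl_bound[OF detN[OF elim]])
      also have "\<dots> \<le> th N / (w N * sqrt (w N))"
        using key_bounds(3)[OF wp, of N] elim by (simp add: th_def thetaN_def)
      finally show ?case by (simp add: divide_inverse)
    qed
    have "filterlim (\<lambda>N. w N * sqrt (w N)) at_top sequentially"
    proof (rule filterlim_at_top_mono[OF wtop])
      show "eventually (\<lambda>N. w N \<le> w N * sqrt (w N)) sequentially"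
        using wtop[unfolded filterlim_at_top, rule_format, of 1]
        by eventually_elim (auto intro: mult_le_cancel_left1[THEN iffD2] simp: mult_le_cancel_left1)
    qed
    then have "((\<lambda>N. inverse (w N * sqrt (w N))) \<longlongrightarrow> 0) sequentially"
      by (rule tendsto_inverse_0_at_top)
    then show "((\<lambda>N. th N * inverse (w N * sqrt (w N))) \<longlongrightarrow> 0) sequentially"
      using tendsto_mult[OF th1] by fastforce
  qed simp

  have e0: "(eN \<longlongrightarrow> 0) sequentially"
  proof (rule tendsto_sandwich[where f="\<lambda>_. 0" and h="\<lambda>N. 1/2 * inverse (w N)"])
    show "eventually (\<lambda>N. 0 \<le> eN N) sequentially"
      using eventually_ge_at_top[of "1::nat"]
    proof eventually_elim
      case (elim N) then show ?case using thg[of N] by (simp add: eN_def one_less_power)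
    qed
    show "eventually (\<lambda>N. eN N \<le> 1/2 * inverse (w N)) sequentially"
      using eventually_ge_at_top[of "1::nat"]
    proof eventually_elim
      case (elim N) then show ?case
        using key_bounds(2)[OF wp elim] by (simp add: eN_def th_def thetaN_def inverse_eq_divide)
    qed
    show "((\<lambda>N. 1/2 * inverse (w N)) \<longlongrightarrow> 0) sequentially"
      using tendsto_mult[OF tendsto_const[of "1/2"] tendsto_inverse_0_at_top[OF wtop]] by simp
  qed simp

  have S1: "(S \<longlongrightarrow> 1) sequentially"
  proof (rule tendsto_sandwich[where f="\<lambda>N. (1 - (2 + eN N) * inverse (DDN N)) / (1 + dlN N)\<^sup>2 - 2 * dlN N * inverse (DDN N)"
        and h="\<lambda>N. 1 / (1 - dlN N)\<^sup>2"])
    have dlh: "eventually (\<lambda>N. dlN N < 1/2) sequentially"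
      using order_tendstoD(2)[OF dl0, of "1/2"] by simp
    show "eventually (\<lambda>N. (1 - (2 + eN N) * inverse (DDN N)) / (1 + dlN N)\<^sup>2 - 2 * dlN N * inverse (DDN N) \<le> S N) sequentially"
      using ev3 DDpos
    proof eventually_elim
      case (elim N)
      interpret detc "th N" N by (rule detN[OF elim(1)])
      have d0: "dlN N \<ge> 0" using dl_nonneg by (simp add: dlN_def)
      have "((DDN N - 2 - eN N) / (1 + dlN N)\<^sup>2 - 2 * dlN N) / DDN N \<le> VV (th N) N / DDN N"
        using VV_lower elim(2) by (intro divide_right_mono) (auto simp: DDN_def dlN_def eN_def)
      moreover have "((DDN N - 2 - eN N) / (1 + dlN N)\<^sup>2 - 2 * dlN N) / DDN N
          = (1 - (2 + eN N) * inverse (DDN N)) / (1 + dlN N)\<^sup>2 - 2 * dlN N * inverse (DDN N)"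
        using elim(2) d0 by (simp add: field_simps)
      ultimately show ?case by (simp add: S_def)
    qed
    show "eventually (\<lambda>N. S N \<le> 1 / (1 - dlN N)\<^sup>2) sequentially"
      using ev3 DDpos dlh
    proof eventually_elim
      case (elim N)
      interpret detc "th N" N by (rule detN[OF elim(1)])
      have "VV (th N) N / DDN N \<le> (DDN N / (1 - dlN N)\<^sup>2) / DDN N"
        using VV_upper elim by (intro divide_right_mono) (auto simp: DDN_def dlN_def)
      then show ?case using elim(2) by (simp add: S_def)
    qed
    show "((\<lambda>N. (1 - (2 + eN N) * inverse (DDN N)) / (1 + dlN N)\<^sup>2 - 2 * dlN N * inverse (DDN N)) \<longlongrightarrow> 1) sequentially"
    proof -
      have "((\<lambda>N. (1 - (2 + eN N) * inverse (DDN N)) / (1 + dlN N)\<^sup>2 - 2 * dlN N * inverse (DDN N))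
         \<longlongrightarrow> (1 - (2 + 0) * 0) / (1 + 0)\<^sup>2 - 2 * 0 * 0) sequentially"
        by (intro tendsto_intros e0 invDD dl0) auto
      then show ?thesis by simp
    qed
    show "((\<lambda>N. 1 / (1 - dlN N)\<^sup>2) \<longlongrightarrow> 1) sequentially"
    proof -
      have "((\<lambda>N. 1 / (1 - dlN N)\<^sup>2) \<longlongrightarrow> 1 / (1 - 0)\<^sup>2) sequentially"
        by (intro tendsto_intros dl0) auto
      then show ?thesis by simp
    qed
  qed

  have stmt_eq: "(\<lambda>N. distr M borel (\<lambda>\<omega>.
        (\<Sum>i=3..N. LL (thetaN w N) N a b i \<omega>) /
        sqrt (\<alpha> * ln ((thetaN w N + sqrt ((thetaN w N)\<^sup>2 - 1)) / (2 * sqrt ((thetaN w N)\<^sup>2 - 1))))))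
     = (\<lambda>N. distr M borel (X N))"
    by (rule ext, rule arg_cong[where f="distr M borel"], rule ext) (simp add: X_def c_def th_def)
  have dlh: "eventually (\<lambda>N. dlN N \<le> 1/2) sequentially"
    using order_tendstoD(2)[OF dl0, of "1/2"] by (auto elim: eventually_mono)
  have cpos: "eventually (\<lambda>N. c N > 0 \<and> (c N)\<^sup>2 = \<alpha> * DDN N) sequentially"
    using ev3 DDpos
  proof eventually_elim
    case (elim N)
    then have "c N = sqrt (\<alpha> * DDN N)" by (intro cDD) auto
    then show ?case using elim al by simp
  qed
  show ?thesis unfolding stmt_eq
  proof (rule levy_continuity)
    fix N
    have "X N \<in> borel_measurable M"
    proof -
      have [measurable]: "LL (th N) N a b i \<in> borel_measurable M" for i
        by (rule LL_meas[OF am bm])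
      show ?thesis unfolding X_def[abs_def] by measurable
    qed
    then show "real_distribution (distr M borel (X N))" by (rule real_distribution_distr)
  next
    show "real_distribution std_normal_distribution" by (rule real_dist_normal_dist)
  next
    fix t :: real
    define K where "K = \<alpha> + (3 * \<alpha>^2 + 6 * \<alpha>^3)"
    define B where "B N = (\<bar>t\<bar>^3 * K / 6 * (sqrt (4 * dlN N) / c N)
        + t^4 * \<alpha>^2 / 8 * (sqrt (4 * dlN N) / c N)^2) * (VV (th N) N / (c N)\<^sup>2)" for N
    define E where "E N = exp (- (t^2) * (\<alpha> * VV (th N) N / (c N)\<^sup>2) / 2)" for N
    define B' where "B' N = (\<bar>t\<bar>^3 * K / 6 * sqrt (4 * dlN N * (inverse \<alpha> * inverse (DDN N)))
        + t^4 * \<alpha>^2 / 8 * (4 * dlN N * (inverse \<alpha> * inverse (DDN N)))) * (S N / \<alpha>)" for N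
    define E' where "E' N = exp (- (t^2) * S N / 2)" for N
    have bound: "eventually (\<lambda>N. cmod (char (distr M borel (X N)) t - E N) \<le> B N) sequentially"
      using ev3 dlh cpos
    proof eventually_elim
      case (elim N)
      show ?case
        using char_N[OF al ind an bm bd detN[OF elim(1)], of "c N" t] elim
        unfolding X_def[abs_def] B_def E_def K_def dlN_def by auto
    qed
    have BB: "eventually (\<lambda>N. B N = B' N) sequentially"
      using cpos ev3
    proof eventually_elim
      case (elim N)
      have d0: "dlN N \<ge> 0" using detc.dl_nonneg[OF detN[OF elim(2)]] by (simp add: dlN_def)
      have "sqrt (4 * dlN N) / c N = sqrt (4 * dlN N * (inverse \<alpha> * inverse (DDN N)))"
      proof -
        have "c N = sqrt (\<alpha> * DDN N)" using elim by (metis real_sqrt_unique less_imp_le)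
        then show ?thesis by (simp add: real_sqrt_mult divide_inverse real_sqrt_inverse)
      qed
      moreover have "(sqrt (4 * dlN N) / c N)^2 = 4 * dlN N * (inverse \<alpha> * inverse (DDN N))"
      proof -
        have "(sqrt (4 * dlN N) / c N)^2 = (sqrt (4 * dlN N))^2 / (c N)^2" by (rule power_divide)
        also have "\<dots> = 4 * dlN N / (\<alpha> * DDN N)" using elim d0 by simp
        finally show ?thesis by (simp add: divide_inverse mult_ac)
      qed
      moreover have "VV (th N) N / (c N)\<^sup>2 = S N / \<alpha>"
        using elim by (simp add: S_def)
      ultimately show ?case by (simp add: B_def B'_def)
    qed
    have EE: "eventually (\<lambda>N. E N = E' N) sequentially"
      using cpos
    proof eventually_elim
      case (elim N)
      then show ?case using al by (simp add: E_def E'_def S_def)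
    qed
    have B'0: "(B' \<longlongrightarrow> 0) sequentially"
    proof -
      have "(B' \<longlongrightarrow> (\<bar>t\<bar>^3 * K / 6 * sqrt (4 * 0 * (inverse \<alpha> * 0)) + t^4 * \<alpha>^2 / 8 * (4 * 0 * (inverse \<alpha> * 0))) * (1 / \<alpha>)) sequentially"
        unfolding B'_def[abs_def] using al by (intro tendsto_intros dl0 invDD S1) auto
      then show ?thesis by simp
    qed
    have E'1: "(E' \<longlongrightarrow> exp (- (t^2) * 1 / 2)) sequentially"
      unfolding E'_def[abs_def] by (intro tendsto_intros S1) auto
    have B0: "(B \<longlongrightarrow> 0) sequentially" using B'0 BB by (simp add: tendsto_cong)
    have E1: "(E \<longlongrightarrow> exp (- (t^2) / 2)) sequentially" using E'1 EE by (simp add: tendsto_cong)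
    have D0: "((\<lambda>N. char (distr M borel (X N)) t - complex_of_real (E N)) \<longlongrightarrow> 0) sequentially"
      by (rule Lim_null_comparison[OF bound B0])
    have "((\<lambda>N. (char (distr M borel (X N)) t - complex_of_real (E N)) + complex_of_real (E N))
        \<longlongrightarrow> 0 + complex_of_real (exp (- (t^2) / 2))) sequentially"
      by (intro tendsto_add D0 tendsto_of_real E1)
    then show "(\<lambda>N. char (distr M borel (X N)) t) \<longlonglongrightarrow> char std_normal_distribution t"
      by (simp add: char_std_normal_distribution)
  qed
qed


end
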